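(* Let $\hat\mu_i(\mathbf O_{i-1}):\mathbb X\times\mathbb A\to\mathbb R$, $i\in[n]$, be any estimates of $\mu^*$ such that $\hat\mu_i$ depends measurably only on $\mathbf O_{i-1}$. Define the AIPW scores $$\hat\Gamma_i(\mathbf O_i):=\frac{g(X_i,A_i)}{\pi_i^*(X_i,\mathbf O_{i-1};A_i)}\{Y_i-\hat\mu_i(\mathbf O_{i-1})(X_i,A_i)\}+\langle g(X_i,\cdot),\hat\mu_i(\mathbf O_{i-1})(X_i,\cdot)\rangle_{\lambda_{\mathbb A}}$$ and the AIPW estimator $\hat\tau_n^{\mathrm{AIPW}}(\mathbf O_n):=\frac1n\sum_{i=1}^n\hat\Gamma_i(\mathbf O_i)$. Then $$\mathbb E_{\mathcal I^*}\big[\{\hat\tau_n^{\mathrm{AIPW}}(\mathbf O_n)-\tau(\mathcal I^* )\}^2\big]\le\frac1n\Big\{v_*^2+\frac1n\sum_{i=1}^n\mathbb E_{\mathcal I^*}\Big[\frac{g^2(X_i,A_i)\{\hat\mu_i(\mathbf O_{i-1})(X_i,A_i)-\mu^*(X_i,A_i)\}^2}{(\pi_i^* )^2(X_i,\mathbf O_{i-1};A_i)}\Big]\Big\}.$$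
   Context: Setup. Let $(\mathbb X,\lambda_{\mathbb X})$, $(\mathbb A,\lambda_{\mathbb A})$, $(\mathbb Y,\lambda_{\mathbb Y})$ be measurable spaces with $\sigma$-finite measures, $\mathbb Y\subseteq\mathbb R$, and $\mathbb O:=\mathbb X\times\mathbb A\times\mathbb Y$. A problem instance is a pair $\mathcal I=(\Xi,\Gamma)$ where $\Xi$ is a probability measure on $\mathbb X$ and $\Gamma$ is a Markov kernel from $\mathbb X\times\mathbb A$ to $\mathbb Y$. For each $i\in[n]$ a known behavioral policy $\Pi_i^*$ is a Markov kernel from $\mathbb X\times\mathbb O^{i-1}$ to $\mathbb A$ with density $\pi_i^*(x,\mathbf o_{i-1};\cdot):=d\Pi_i^*(\cdot\mid x,\mathbf o_{i-1})/d\lambda_{\mathbb A}$. Under instance $\mathcal I$, data $\mathbf O_n=(X_1,A_1,Y_1,\dots,X_n,A_n,Y_n)$ are generated sequentially: for $i=1,\dots,n$, $X_i\sim\Xi$ independently of $\mathbf O_{i-1}$; $A_i\mid(X_i,\mathbf O_{i-1})\sim\Pi_i^*(\cdot\mid X_i,\mathbf O_{i-1})$; $Y_i\mid(X_i,A_i,\mathbf O_{i-1})\sim\Gamma(\cdot\mid X_i,A_i)$. Here $\mathbf O_i$ denotes the first $i$ triples ($\mathbf O_0=\varnothing$) and $\mathcal H_i:=\sigma(\mathbf O_i)$. $\mathbb E_{\mathcal I}$, $\mathrm{Var}_{\mathcal I}$ denote expectation/variance under this law. The true instance is $\mathcal I^*=(\Xi^*,\Gamma^* )$, with treatment effect $\mu^*(x,a):=\int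 y\,\Gamma^*(dy\mid x,a)$ and conditional variance $\sigma^2(x,a):=\int(y-\mu^*(x,a))^2\Gamma^*(dy\mid x,a)<\infty$. A measurable evaluation function $g:\mathbb X\times\mathbb A\to\mathbb R$ is given; $\langle f,h\rangle_{\lambda_{\mathbb A}}:=\int_{\mathbb A}f(a)h(a)\,d\lambda_{\mathbb A}(a)$. The target is $\tau(\mathcal I^* ):=\mathbb E_{X\sim\Xi^*}[\langle g(X,\cdot),\mu^*(X,\cdot)\rangle_{\lambda_{\mathbb A}}]$. For $\varphi:\mathbb X\times\mathbb A\to\mathbb R$ and $k\in[n]$, $\|\varphi\|_{(k)}^2:=\frac1k\sum_{i=1}^k\mathbb E_{\mathcal I^*}\big[g^2(X_i,A_i)\varphi^2(X_i,A_i)/(\pi_i^* )^2(X_i,\mathbf O_{i-1};A_i)\big]$. The efficient variance is $v_*^2:=\mathrm{Var}_{X\sim\Xi^*}[\langle g(X,\cdot),\mu^*(X,\cdot)\rangle_{\lambda_{\mathbb A}}]+\|\sigma\|_{(n)}^2$. All expectations appearing are assumed finite. *)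

theory Defs
  imports "HOL-Probability.Probability"
begin

text \<open>Histories of the
first i observations are restricted functions on {..<i} (0-based indexing:
the paper's O_{i-1} for i in [n] is our hist i for i in {..<n}).\<close>

definition obsM :: "'x measure \<Rightarrow> 'a measure \<Rightarrow> ('x \<times> 'a \<times> real) measure" where
  "obsM LX LA = LX \<Otimes>\<^sub>M LA \<Otimes>\<^sub>M (borel :: real measure)"

definition histM :: "'x measure \<Rightarrow> 'a measure \<Rightarrow> nat \<Rightarrow> (nat \<Rightarrow> 'x \<times> 'a \<times> real) measure" where
  "histM LX LA i = PiM {..<i} (\<lambda>_. obsM LX LA)"

definition hist :: "(nat \<Rightarrow> 'w \<Rightarrow> 'x) \<Rightarrow> (nat \<Rightarrow> 'w \<Rightarrow> 'a) \<Rightarrow> (nat \<Rightarrow> 'w \<Rightarrow> real)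
    \<Rightarrow> nat \<Rightarrow> 'w \<Rightarrow> (nat \<Rightarrow> 'x \<times> 'a \<times> real)" where
  "hist X A Y i \<omega> = (\<lambda>j\<in>{..<i}. (X j \<omega>, A j \<omega>, Y j \<omega>))"

definition mu_star :: "('x \<Rightarrow> 'a \<Rightarrow> real measure) \<Rightarrow> 'x \<Rightarrow> 'a \<Rightarrow> real" where
  "mu_star Gam x a = (\<integral>y. y \<partial>(Gam x a))"

definition sigma2 :: "('x \<Rightarrow> 'a \<Rightarrow> real measure) \<Rightarrow> 'x \<Rightarrow> 'a \<Rightarrow> real" where
  "sigma2 Gam x a = (\<integral>y. (y - mu_star Gam x a)\<^sup>2 \<partial>(Gam x a))"

definition inner_A :: "'a measure \<Rightarrow> ('a \<Rightarrow> real) \<Rightarrow> ('a \<Rightarrow> real) \<Rightarrow> real" where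
  "inner_A LA f h = (\<integral>a. f a * h a \<partial>LA)"

definition tau :: "'x measure \<Rightarrow> 'a measure \<Rightarrow> ('x \<Rightarrow> 'a \<Rightarrow> real measure)
    \<Rightarrow> ('x \<Rightarrow> 'a \<Rightarrow> real) \<Rightarrow> real" where
  "tau Xi LA Gam g = (\<integral>x. inner_A LA (g x) (mu_star Gam x) \<partial>Xi)"

definition aipw_score ::
  "'a measure \<Rightarrow> ('x \<Rightarrow> 'a \<Rightarrow> real)
   \<Rightarrow> (nat \<Rightarrow> 'x \<Rightarrow> (nat \<Rightarrow> 'x \<times> 'a \<times> real) \<Rightarrow> 'a \<Rightarrow> real)
   \<Rightarrow> (nat \<Rightarrow> (nat \<Rightarrow> 'x \<times> 'a \<times> real) \<Rightarrow> 'x \<Rightarrow> 'a \<Rightarrow> real)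
   \<Rightarrow> (nat \<Rightarrow> 'w \<Rightarrow> 'x) \<Rightarrow> (nat \<Rightarrow> 'w \<Rightarrow> 'a) \<Rightarrow> (nat \<Rightarrow> 'w \<Rightarrow> real)
   \<Rightarrow> nat \<Rightarrow> 'w \<Rightarrow> real" where
  "aipw_score LA g pol muhat X A Y i \<omega> =
     g (X i \<omega>) (A i \<omega>) / pol i (X i \<omega>) (hist X A Y i \<omega>) (A i \<omega>)
       * (Y i \<omega> - muhat i (hist X A Y i \<omega>) (X i \<omega>) (A i \<omega>))
     + inner_A LA (g (X i \<omega>)) (muhat i (hist X A Y i \<omega>) (X i \<omega>))"

definition tau_aipw ::
  "'a measure \<Rightarrow> ('x \<Rightarrow> 'a \<Rightarrow> real)
   \<Rightarrow> (nat \<Rightarrow> 'x \<Rightarrow> (nat \<Rightarrow> 'x \<times> 'a \<times> real) \<Rightarrow> 'a \<Rightarrow> real)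
   \<Rightarrow> (nat \<Rightarrow> (nat \<Rightarrow> 'x \<times> 'a \<times> real) \<Rightarrow> 'x \<Rightarrow> 'a \<Rightarrow> real)
   \<Rightarrow> (nat \<Rightarrow> 'w \<Rightarrow> 'x) \<Rightarrow> (nat \<Rightarrow> 'w \<Rightarrow> 'a) \<Rightarrow> (nat \<Rightarrow> 'w \<Rightarrow> real)
   \<Rightarrow> nat \<Rightarrow> 'w \<Rightarrow> real" where
  "tau_aipw LA g pol muhat X A Y n \<omega> =
     (1 / real n) * (\<Sum>i<n. aipw_score LA g pol muhat X A Y i \<omega>)"

definition norm_k_sq ::
  "'w measure \<Rightarrow> ('x \<Rightarrow> 'a \<Rightarrow> real)
   \<Rightarrow> (nat \<Rightarrow> 'x \<Rightarrow> (nat \<Rightarrow> 'x \<times> 'a \<times> real) \<Rightarrow> 'a \<Rightarrow> real)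
   \<Rightarrow> (nat \<Rightarrow> 'w \<Rightarrow> 'x) \<Rightarrow> (nat \<Rightarrow> 'w \<Rightarrow> 'a) \<Rightarrow> (nat \<Rightarrow> 'w \<Rightarrow> real)
   \<Rightarrow> ('x \<Rightarrow> 'a \<Rightarrow> real) \<Rightarrow> nat \<Rightarrow> real" where
  "norm_k_sq M g pol X A Y \<phi> k =
     (1 / real k) * (\<Sum>i<k. \<integral>\<omega>. (g (X i \<omega>) (A i \<omega>))\<^sup>2 * (\<phi> (X i \<omega>) (A i \<omega>))\<^sup>2
         / (pol i (X i \<omega>) (hist X A Y i \<omega>) (A i \<omega>))\<^sup>2 \<partial>M)"

definition v_star_sq ::
  "'w measure \<Rightarrow> 'x measure \<Rightarrow> 'a measure \<Rightarrow> ('x \<Rightarrow> 'a \<Rightarrow> real measure)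
   \<Rightarrow> ('x \<Rightarrow> 'a \<Rightarrow> real)
   \<Rightarrow> (nat \<Rightarrow> 'x \<Rightarrow> (nat \<Rightarrow> 'x \<times> 'a \<times> real) \<Rightarrow> 'a \<Rightarrow> real)
   \<Rightarrow> (nat \<Rightarrow> 'w \<Rightarrow> 'x) \<Rightarrow> (nat \<Rightarrow> 'w \<Rightarrow> 'a) \<Rightarrow> (nat \<Rightarrow> 'w \<Rightarrow> real)
   \<Rightarrow> nat \<Rightarrow> real" where
  "v_star_sq M Xi LA Gam g pol X A Y n =
     prob_space.variance Xi (\<lambda>x. inner_A LA (g x) (mu_star Gam x))
     + norm_k_sq M g pol X A Y (\<lambda>x a. sqrt (sigma2 Gam x a)) n"

end

theory Submission
  imports Defs
begin

lemma nn_pos_neg_eq: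
  fixes f :: "'z \<Rightarrow> real"
  assumes f: "integrable NN f" and z: "integral\<^sup>L NN f = 0"
  shows "(\<integral>\<^sup>+x. ennreal (f x) \<partial>NN) = (\<integral>\<^sup>+x. ennreal (- f x) \<partial>NN)"
proof -
  have fin: "(\<integral>\<^sup>+x. ennreal (f x) \<partial>NN) \<noteq> \<infinity>" "(\<integral>\<^sup>+x. ennreal (- f x) \<partial>NN) \<noteq> \<infinity>"
    using f by (auto simp: real_integrable_def)
  obtain p where p: "(\<integral>\<^sup>+x. ennreal (f x) \<partial>NN) = ennreal p" "0 \<le> p"
    using fin(1) by (cases "(\<integral>\<^sup>+x. ennreal (f x) \<partial>NN)" rule: ennreal_cases) auto
  obtain q where q: "(\<integral>\<^sup>+x. ennreal (- f x) \<partial>NN) = ennreal q" "0 \<le> q"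
    using fin(2) by (cases "(\<integral>\<^sup>+x. ennreal (- f x) \<partial>NN)" rule: ennreal_cases) auto
  have "p - q = 0"
    using real_lebesgue_integral_def[OF f] z p q by simp
  then show ?thesis using p q by simp
qed

lemma int_zero_of_nn:
  fixes f :: "'z \<Rightarrow> real"
  assumes f: "integrable NN f" and e: "(\<integral>\<^sup>+x. ennreal (f x) \<partial>NN) = (\<integral>\<^sup>+x. ennreal (- f x) \<partial>NN)"
  shows "integral\<^sup>L NN f = 0"
  using real_lebesgue_integral_def[OF f] e by simp

lemma int_prod:
  fixes f g :: "'z \<Rightarrow> real"
  assumes [measurable]: "f \<in> borel_measurable NN" "g \<in> borel_measurable NN"
    and "integrable NN (\<lambda>x. (f x)\<^sup>2)" "integrable NN (\<lambda>x. (g x)\<^sup>2)"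
  shows "integrable NN (\<lambda>x. f x * g x)"
proof -
  have b: "integrable NN (\<lambda>x. (f x)\<^sup>2 + (g x)\<^sup>2)" using assms by simp
  have m: "(\<lambda>x. f x * g x) \<in> borel_measurable NN" by measurable
  have "norm (f x * g x) \<le> norm ((f x)\<^sup>2 + (g x)\<^sup>2)" for x
  proof -
    have "2 * \<bar>f x\<bar> * \<bar>g x\<bar> \<le> \<bar>f x\<bar>\<^sup>2 + \<bar>g x\<bar>\<^sup>2" by (rule sum_squares_bound)
    then have h2: "2 * (\<bar>f x\<bar> * \<bar>g x\<bar>) \<le> (f x)\<^sup>2 + (g x)\<^sup>2" by (simp add: mult.assoc)
    have "0 \<le> \<bar>f x\<bar> * \<bar>g x\<bar>" by simp
    then have "\<bar>f x\<bar> * \<bar>g x\<bar> \<le> (f x)\<^sup>2 + (g x)\<^sup>2" using h2 by linarith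
    then show "norm (f x * g x) \<le> norm ((f x)\<^sup>2 + (g x)\<^sup>2)" by (simp add: abs_mult)
  qed
  then show ?thesis by (intro Bochner_Integration.integrable_bound[OF b m] AE_I2)
qed

lemma int_sq_add:
  fixes f g :: "'z \<Rightarrow> real"
  assumes [measurable]: "f \<in> borel_measurable NN" "g \<in> borel_measurable NN"
    and "integrable NN (\<lambda>x. (f x)\<^sup>2)" "integrable NN (\<lambda>x. (g x)\<^sup>2)"
  shows "integrable NN (\<lambda>x. (f x + g x)\<^sup>2)"
proof -
  have "integrable NN (\<lambda>x. (f x)\<^sup>2 + (g x)\<^sup>2 + 2 * f x * g x)"
    using assms int_prod[OF assms] by (simp add: mult.assoc)
  then show ?thesis by (simp add: power2_sum)
qed



lemma cs_density:
  fixes p q :: "'z \<Rightarrow> real"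
  assumes pm[measurable]: "p \<in> borel_measurable L" and qm[measurable]: "q \<in> borel_measurable L"
    and pnn: "\<And>a. a \<in> space L \<Longrightarrow> 0 \<le> p a"
    and pnorm: "(\<integral>\<^sup>+a. ennreal (p a) \<partial>L) = 1"
  shows "ennreal ((\<integral>a. p a * q a \<partial>L)\<^sup>2) \<le> (\<integral>\<^sup>+a. ennreal (p a) * ennreal ((q a)\<^sup>2) \<partial>L)"
proof -
  let ?P = "density L (\<lambda>a. ennreal (p a))"
  have eqR: "(\<integral>\<^sup>+a. ennreal (p a) * ennreal ((q a)\<^sup>2) \<partial>L) = (\<integral>\<^sup>+a. ennreal ((q a)\<^sup>2) \<partial>?P)"
    by (simp add: nn_integral_density)
  show ?thesis
  proof (cases "(\<integral>\<^sup>+a. ennreal (p a) * ennreal ((q a)\<^sup>2) \<partial>L) = \<infinity>")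
    case True then show ?thesis by simp
  next
    case False
    have P: "prob_space ?P"
    proof
      show "emeasure ?P (space ?P) = 1"
        using pnorm by (simp add: emeasure_density)
    qed
    interpret P: prob_space ?P by (rule P)
    have pAE: "AE a in L. 0 \<le> p a" using pnn by (auto intro: AE_I2)
    have q2: "integrable ?P (\<lambda>a. (q a)\<^sup>2)"
      by (rule integrableI_nonneg) (use False eqR in \<open>auto simp: less_top\<close>)
    have q1: "integrable ?P q"
      by (rule P.square_integrable_imp_integrable) (use q2 in auto)
    have v: "0 \<le> P.variance q" by (rule P.variance_positive)
    have "P.variance q = P.expectation (\<lambda>a. (q a)\<^sup>2) - (P.expectation q)\<^sup>2"
      by (rule P.variance_eq[OF q1 q2])
    with v have le: "(P.expectation q)\<^sup>2 \<le> P.expectation (\<lambda>a. (q a)\<^sup>2)" by simp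
    have e1: "P.expectation q = (\<integral>a. p a * q a \<partial>L)"
      using integral_density[OF qm pm pAE] by simp
    have e2: "ennreal (P.expectation (\<lambda>a. (q a)\<^sup>2)) = (\<integral>\<^sup>+a. ennreal ((q a)\<^sup>2) \<partial>?P)"
      by (rule nn_integral_eq_integral[symmetric, OF q2]) simp
    have "ennreal ((\<integral>a. p a * q a \<partial>L)\<^sup>2) \<le> ennreal (P.expectation (\<lambda>a. (q a)\<^sup>2))"
      using le e1 by (intro ennreal_leI) simp
    then show ?thesis using e2 eqR by simp
  qed
qed

locale aipw =
  fixes M :: "'w measure"
    and LX :: "'x measure" and LA :: "'a measure"
    and Xi :: "'x measure" and Gam :: "'x \<Rightarrow> 'a \<Rightarrow> real measure"
    and g :: "'x \<Rightarrow> 'a \<Rightarrow> real"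
    and pol :: "nat \<Rightarrow> 'x \<Rightarrow> (nat \<Rightarrow> 'x \<times> 'a \<times> real) \<Rightarrow> 'a \<Rightarrow> real"
    and muhat :: "nat \<Rightarrow> (nat \<Rightarrow> 'x \<times> 'a \<times> real) \<Rightarrow> 'x \<Rightarrow> 'a \<Rightarrow> real"
    and X :: "nat \<Rightarrow> 'w \<Rightarrow> 'x" and A :: "nat \<Rightarrow> 'w \<Rightarrow> 'a" and Y :: "nat \<Rightarrow> 'w \<Rightarrow> real"
    and n :: nat
  assumes n_pos: "0 < n"
    and sf_X: "sigma_finite_measure LX"
    and sf_A: "sigma_finite_measure LA"
    and Xi_prob: "prob_space Xi" and Xi_sets: "sets Xi = sets LX"
    and Gam_kernel: "(\<lambda>(x, a). Gam x a) \<in> measurable (LX \<Otimes>\<^sub>M LA) (subprob_algebra borel)"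
    and Gam_prob: "\<And>x a. x \<in> space LX \<Longrightarrow> a \<in> space LA \<Longrightarrow> prob_space (Gam x a)"
    and Gam_sq: "\<And>x a. x \<in> space LX \<Longrightarrow> a \<in> space LA \<Longrightarrow> integrable (Gam x a) (\<lambda>y. y\<^sup>2)"
    and g_meas: "(\<lambda>(x, a). g x a) \<in> borel_measurable (LX \<Otimes>\<^sub>M LA)"
    \<comment> \<open>behavioural policies: densities (w.r.t. LA) of Markov kernels X x O^(i-1) \<rightarrow> A\<close>
    and pol_meas: "\<And>i. i < n \<Longrightarrow>
        (\<lambda>(x, h, a). pol i x h a) \<in> borel_measurable (LX \<Otimes>\<^sub>M histM LX LA i \<Otimes>\<^sub>M LA)"
    and pol_pos: "\<And>i x h a. i < n \<Longrightarrow> x \<in> space LX \<Longrightarrow> h \<in> space (histM LX LA i)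
        \<Longrightarrow> a \<in> space LA \<Longrightarrow> 0 < pol i x h a"
    and pol_norm: "\<And>i x h. i < n \<Longrightarrow> x \<in> space LX \<Longrightarrow> h \<in> space (histM LX LA i)
        \<Longrightarrow> (\<integral>\<^sup>+ a. ennreal (pol i x h a) \<partial>LA) = 1"
    and muhat_meas: "\<And>i. i < n \<Longrightarrow>
        (\<lambda>(h, x, a). muhat i h x a) \<in> borel_measurable (histM LX LA i \<Otimes>\<^sub>M LX \<Otimes>\<^sub>M LA)"
    and M_prob: "prob_space M"
    and X_meas: "\<And>i. i < n \<Longrightarrow> X i \<in> measurable M LX"
    and A_meas: "\<And>i. i < n \<Longrightarrow> A i \<in> measurable M LA"
    and Y_meas: "\<And>i. i < n \<Longrightarrow> Y i \<in> borel_measurable M"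
    \<comment> \<open>X_i ~ Xi independent of O_(i-1), and A_i | (X_i, O_(i-1)) has density pi_i\<close>
    and law_XA: "\<And>i. i < n \<Longrightarrow>
        distr M (histM LX LA i \<Otimes>\<^sub>M LX \<Otimes>\<^sub>M LA) (\<lambda>\<omega>. (hist X A Y i \<omega>, X i \<omega>, A i \<omega>))
        = density (distr M (histM LX LA i) (hist X A Y i) \<Otimes>\<^sub>M Xi \<Otimes>\<^sub>M LA)
                  (\<lambda>(h, x, a). ennreal (pol i x h a))"
    \<comment> \<open>Y_i | (X_i, A_i, O_(i-1)) ~ Gam(. | X_i, A_i)\<close>
    and law_Y: "\<And>i. i < n \<Longrightarrow>
        distr M (histM LX LA i \<Otimes>\<^sub>M LX \<Otimes>\<^sub>M LA \<Otimes>\<^sub>M borel)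
              (\<lambda>\<omega>. (hist X A Y i \<omega>, X i \<omega>, A i \<omega>, Y i \<omega>))
        = distr M (histM LX LA i \<Otimes>\<^sub>M LX \<Otimes>\<^sub>M LA) (\<lambda>\<omega>. (hist X A Y i \<omega>, X i \<omega>, A i \<omega>))
          \<bind> (\<lambda>(h, x, a). distr (Gam x a) (histM LX LA i \<Otimes>\<^sub>M LX \<Otimes>\<^sub>M LA \<Otimes>\<^sub>M borel)
                                   (\<lambda>y. (h, x, a, y)))"
    and int_gmu: "\<And>x. x \<in> space LX \<Longrightarrow> integrable LA (\<lambda>a. g x a * mu_star Gam x a)"
    and int_gmuhat: "\<And>i h x. i < n \<Longrightarrow> h \<in> space (histM LX LA i) \<Longrightarrow> x \<in> space LX
        \<Longrightarrow> integrable LA (\<lambda>a. g x a * muhat i h x a)"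
    and int_tau: "integrable Xi (\<lambda>x. inner_A LA (g x) (mu_star Gam x))"
    and int_var: "integrable Xi (\<lambda>x. (inner_A LA (g x) (mu_star Gam x))\<^sup>2)"
    and int_sigma: "\<And>i. i < n \<Longrightarrow> integrable M (\<lambda>\<omega>.
        (g (X i \<omega>) (A i \<omega>))\<^sup>2 * (sqrt (sigma2 Gam (X i \<omega>) (A i \<omega>)))\<^sup>2
          / (pol i (X i \<omega>) (hist X A Y i \<omega>) (A i \<omega>))\<^sup>2)"
    and int_err: "\<And>i. i < n \<Longrightarrow> integrable M (\<lambda>\<omega>.
        (g (X i \<omega>) (A i \<omega>))\<^sup>2
          * (muhat i (hist X A Y i \<omega>) (X i \<omega>) (A i \<omega>) - mu_star Gam (X i \<omega>) (A i \<omega>))\<^sup>2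
          / (pol i (X i \<omega>) (hist X A Y i \<omega>) (A i \<omega>))\<^sup>2)"

begin

lemma hist_meas: "i \<le> n \<Longrightarrow> hist X A Y i \<in> measurable M (histM LX LA i)"
  unfolding hist_def histM_def obsM_def
  by (intro measurable_restrict measurable_Pair) (auto intro: X_meas A_meas Y_meas)

lemma sf_XiLA: "sigma_finite_measure (Xi \<Otimes>\<^sub>M LA)"
  by (intro sigma_finite_pair_measure sf_A prob_space_imp_sigma_finite Xi_prob)

lemma H_prob: "i \<le> n \<Longrightarrow> prob_space (distr M (histM LX LA i) (hist X A Y i))"
  by (intro prob_space.prob_space_distr M_prob hist_meas)

lemma pol_meas3: "i < n \<Longrightarrow> (\<lambda>(h, x, a). pol i x h a) \<in> borel_measurable (histM LX LA i \<Otimes>\<^sub>M LX \<Otimes>\<^sub>M LA)"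
proof -
  assume i: "i < n"
  have "(\<lambda>(x, h, a). pol i x h a) \<circ> (\<lambda>(h, x, a). (x, h, a)) \<in> borel_measurable (histM LX LA i \<Otimes>\<^sub>M LX \<Otimes>\<^sub>M LA)"
    by (rule measurable_comp[OF _ pol_meas[OF i]]) measurable
  then show ?thesis by (simp add: o_def case_prod_beta)
qed

lemma sets_S3: "sets (distr M (histM LX LA i) (hist X A Y i) \<Otimes>\<^sub>M Xi \<Otimes>\<^sub>M LA) = sets (histM LX LA i \<Otimes>\<^sub>M LX \<Otimes>\<^sub>M LA)"
  by (intro sets_pair_measure_cong) (auto simp: Xi_sets)

lemma LAW3:
  assumes i: "i < n" and F: "F \<in> borel_measurable (histM LX LA i \<Otimes>\<^sub>M LX \<Otimes>\<^sub>M LA)"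
  shows "(\<integral>\<^sup>+\<omega>. F (hist X A Y i \<omega>, X i \<omega>, A i \<omega>) \<partial>M)
    = (\<integral>\<^sup>+h. \<integral>\<^sup>+x. \<integral>\<^sup>+a. ennreal (pol i x h a) * F (h, x, a) \<partial>LA \<partial>Xi \<partial>distr M (histM LX LA i) (hist X A Y i))"
proof -
  let ?H = "distr M (histM LX LA i) (hist X A Y i)"
  let ?S = "histM LX LA i \<Otimes>\<^sub>M LX \<Otimes>\<^sub>M LA"
  let ?B = "?H \<Otimes>\<^sub>M Xi \<Otimes>\<^sub>M LA"
  let ?p = "\<lambda>(h, x, a). ennreal (pol i x h a)"
  have hm: "hist X A Y i \<in> measurable M (histM LX LA i)" using i by (intro hist_meas) simp
  have Zm: "(\<lambda>\<omega>. (hist X A Y i \<omega>, X i \<omega>, A i \<omega>)) \<in> measurable M ?S"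
    using hm X_meas[OF i] A_meas[OF i] by measurable
  have FB: "F \<in> borel_measurable ?B" using F unfolding measurable_cong_sets[OF sets_S3 refl] .
  have pB: "?p \<in> borel_measurable ?B"
  proof -
    have "(\<lambda>p. ennreal ((\<lambda>(h, x, a). pol i x h a) p)) \<in> borel_measurable ?S"
      using pol_meas3[OF i] by measurable
    then show ?thesis unfolding measurable_cong_sets[OF sets_S3 refl] by (simp add: case_prod_beta)
  qed
  have "(\<integral>\<^sup>+\<omega>. F (hist X A Y i \<omega>, X i \<omega>, A i \<omega>) \<partial>M) = (\<integral>\<^sup>+p. F p \<partial>distr M ?S (\<lambda>\<omega>. (hist X A Y i \<omega>, X i \<omega>, A i \<omega>)))"
    using Zm F by (simp add: nn_integral_distr)
  also have "\<dots> = (\<integral>\<^sup>+p. F p \<partial>density ?B ?p)"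
    using law_XA[OF i] by simp
  also have "\<dots> = (\<integral>\<^sup>+p. ?p p * F p \<partial>?B)"
    using FB pB by (simp add: nn_integral_density)
  also have "\<dots> = (\<integral>\<^sup>+h. \<integral>\<^sup>+q. ?p (h, q) * F (h, q) \<partial>(Xi \<Otimes>\<^sub>M LA) \<partial>?H)"
    using borel_measurable_times_ennreal[OF pB FB] by (rule sigma_finite_measure.nn_integral_fst[OF sf_XiLA, symmetric])
  also have "\<dots> = (\<integral>\<^sup>+h. \<integral>\<^sup>+x. \<integral>\<^sup>+a. ennreal (pol i x h a) * F (h, x, a) \<partial>LA \<partial>Xi \<partial>?H)"
  proof (intro nn_integral_cong)
    fix h assume h: "h \<in> space ?H"
    have "(\<lambda>q. ?p (h, q) * F (h, q)) \<in> borel_measurable (Xi \<Otimes>\<^sub>M LA)"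
      using borel_measurable_times_ennreal[OF pB FB] h by (intro measurable_compose_Pair1[of _ "?H"]) auto
    then show "(\<integral>\<^sup>+q. ?p (h, q) * F (h, q) \<partial>(Xi \<Otimes>\<^sub>M LA)) = (\<integral>\<^sup>+x. \<integral>\<^sup>+a. ennreal (pol i x h a) * F (h, x, a) \<partial>LA \<partial>Xi)"
      by (subst sigma_finite_measure.nn_integral_fst[OF sf_A, symmetric]) (auto simp: case_prod_beta)
  qed
  finally show ?thesis .
qed



lemma Gam_meas3: "(\<lambda>q. Gam (fst (snd q)) (snd (snd q))) \<in> measurable (histM LX LA i \<Otimes>\<^sub>M LX \<Otimes>\<^sub>M LA) (subprob_algebra borel)"
proof -
  have "(\<lambda>(x, a). Gam x a) \<circ> snd \<in> measurable (histM LX LA i \<Otimes>\<^sub>M LX \<Otimes>\<^sub>M LA) (subprob_algebra borel)"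
    by (rule measurable_comp[OF measurable_snd Gam_kernel])
  then show ?thesis by (simp add: o_def case_prod_beta)
qed

lemma kernel_meas: "(\<lambda>(h, x, a). distr (Gam x a) (histM LX LA i \<Otimes>\<^sub>M LX \<Otimes>\<^sub>M LA \<Otimes>\<^sub>M borel) (\<lambda>y. (h, x, a, y)))
   \<in> measurable (histM LX LA i \<Otimes>\<^sub>M LX \<Otimes>\<^sub>M LA) (subprob_algebra (histM LX LA i \<Otimes>\<^sub>M LX \<Otimes>\<^sub>M LA \<Otimes>\<^sub>M borel))"
proof -
  let ?S = "histM LX LA i \<Otimes>\<^sub>M LX \<Otimes>\<^sub>M LA"
  let ?S4 = "histM LX LA i \<Otimes>\<^sub>M LX \<Otimes>\<^sub>M LA \<Otimes>\<^sub>M (borel :: real measure)"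
  have f: "(\<lambda>(q, y). (fst q, fst (snd q), snd (snd q), y)) \<in> measurable (?S \<Otimes>\<^sub>M borel) ?S4"
    by measurable
  have "(\<lambda>q. distr (Gam (fst (snd q)) (snd (snd q))) ?S4 (\<lambda>y. (fst q, fst (snd q), snd (snd q), y))) \<in> measurable ?S (subprob_algebra ?S4)"
    by (rule measurable_distr2[OF _ Gam_meas3]) (use f in \<open>simp add: case_prod_beta\<close>)
  then show ?thesis by (simp add: case_prod_beta)
qed

lemma LAW4:
  assumes i: "i < n" and F: "F \<in> borel_measurable (histM LX LA i \<Otimes>\<^sub>M LX \<Otimes>\<^sub>M LA \<Otimes>\<^sub>M borel)"
  shows "(\<integral>\<^sup>+\<omega>. F (hist X A Y i \<omega>, X i \<omega>, A i \<omega>, Y i \<omega>) \<partial>M)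
    = (\<integral>\<^sup>+\<omega>. (\<integral>\<^sup>+y. F (hist X A Y i \<omega>, X i \<omega>, A i \<omega>, y) \<partial>Gam (X i \<omega>) (A i \<omega>)) \<partial>M)"
proof -
  let ?S = "histM LX LA i \<Otimes>\<^sub>M LX \<Otimes>\<^sub>M LA"
  let ?S4 = "histM LX LA i \<Otimes>\<^sub>M LX \<Otimes>\<^sub>M LA \<Otimes>\<^sub>M (borel :: real measure)"
  let ?D = "distr M ?S (\<lambda>\<omega>. (hist X A Y i \<omega>, X i \<omega>, A i \<omega>))"
  let ?K = "\<lambda>(h, x, a). distr (Gam x a) ?S4 (\<lambda>y. (h, x, a, y))"
  let ?G = "\<lambda>q. \<integral>\<^sup>+y. F (fst q, fst (snd q), snd (snd q), y) \<partial>Gam (fst (snd q)) (snd (snd q))"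
  have hm: "hist X A Y i \<in> measurable M (histM LX LA i)" using i by (intro hist_meas) simp
  have Zm: "(\<lambda>\<omega>. (hist X A Y i \<omega>, X i \<omega>, A i \<omega>)) \<in> measurable M ?S"
    using hm X_meas[OF i] A_meas[OF i] by measurable
  have Z4m: "(\<lambda>\<omega>. (hist X A Y i \<omega>, X i \<omega>, A i \<omega>, Y i \<omega>)) \<in> measurable M ?S4"
    using hm X_meas[OF i] A_meas[OF i] Y_meas[OF i] by measurable
  have KD: "?K \<in> measurable ?D (subprob_algebra ?S4)"
    using kernel_meas[of i] by (simp cong: measurable_cong_sets)
  have Gm: "?G \<in> borel_measurable ?S"
  proof (rule nn_integral_measurable_subprob_algebra2[OF _ Gam_meas3])
    show "(\<lambda>(q, y). F (fst q, fst (snd q), snd (snd q), y)) \<in> borel_measurable (?S \<Otimes>\<^sub>M borel)"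
      using F by measurable
  qed
  have "(\<integral>\<^sup>+\<omega>. F (hist X A Y i \<omega>, X i \<omega>, A i \<omega>, Y i \<omega>) \<partial>M) = (\<integral>\<^sup>+p. F p \<partial>distr M ?S4 (\<lambda>\<omega>. (hist X A Y i \<omega>, X i \<omega>, A i \<omega>, Y i \<omega>)))"
    using Z4m F by (simp add: nn_integral_distr)
  also have "\<dots> = (\<integral>\<^sup>+p. F p \<partial>(?D \<bind> ?K))"
    using law_Y[OF i] by simp
  also have "\<dots> = (\<integral>\<^sup>+q. \<integral>\<^sup>+p. F p \<partial>?K q \<partial>?D)"
    using F KD by (rule nn_integral_bind)
  also have "\<dots> = (\<integral>\<^sup>+q. ?G q \<partial>?D)"
  proof (intro nn_integral_cong)
    fix q assume q: "q \<in> space ?D"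
    obtain h x a where qq: "q = (h, x, a)" by (cases q) auto
    have hx: "h \<in> space (histM LX LA i)" "x \<in> space LX" "a \<in> space LA"
      using q by (auto simp: qq space_pair_measure)
    have sG: "sets (Gam x a) = sets borel"
      using measurable_space[OF Gam_kernel, of "(x, a)"] hx by (simp add: space_pair_measure space_subprob_algebra)
    have m: "(\<lambda>y. (h, x, a, y)) \<in> measurable (Gam x a) ?S4"
      using hx by (simp add: measurable_cong_sets[OF sG refl])
    show "(\<integral>\<^sup>+p. F p \<partial>?K q) = ?G q"
      using m F by (simp add: qq nn_integral_distr)
  qed
  also have "\<dots> = (\<integral>\<^sup>+\<omega>. ?G (hist X A Y i \<omega>, X i \<omega>, A i \<omega>) \<partial>M)"
    using Zm Gm by (simp add: nn_integral_distr)
  finally show ?thesis by simp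
qed


definition "cf i h x a = g x a / pol i x h a"
definition "bf i h x = inner_A LA (g x) (muhat i h x) - inner_A LA (g x) (mu_star Gam x)"
definition "Wf x = inner_A LA (g x) (mu_star Gam x) - tau Xi LA Gam g"
definition "af i h x a = cf i h x a * (mu_star Gam x a - muhat i h x a)"
definition "Vf i h x a = af i h x a + bf i h x"
definition "Uf i h x a y = cf i h x a * (y - mu_star Gam x a)"

lemma mu_meas[measurable]: "(\<lambda>(x, a). mu_star Gam x a) \<in> borel_measurable (LX \<Otimes>\<^sub>M LA)"
proof -
  have "(\<lambda>N. integral\<^sup>L N (\<lambda>y. y)) \<circ> (\<lambda>(x, a). Gam x a) \<in> borel_measurable (LX \<Otimes>\<^sub>M LA)"
    by (rule measurable_comp[OF Gam_kernel]) measurable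
  then show ?thesis by (simp add: o_def case_prod_beta mu_star_def)
qed

lemma g_meas'[measurable]: "(\<lambda>(x, a). g x a) \<in> borel_measurable (LX \<Otimes>\<^sub>M LA)"
  by (rule g_meas)

lemma innerg_meas[measurable]: "(\<lambda>x. inner_A LA (g x) (mu_star Gam x)) \<in> borel_measurable LX"
  unfolding inner_A_def
  by (rule sigma_finite_measure.borel_measurable_lebesgue_integral[OF sf_A]) measurable

lemma pol_comp:
  assumes i: "i < n" and [measurable]: "h \<in> measurable N (histM LX LA i)" "x \<in> measurable N LX" "a \<in> measurable N LA"
  shows "(\<lambda>w. pol i (x w) (h w) (a w)) \<in> borel_measurable N"
proof -
  have "(\<lambda>(x, h, a). pol i x h a) \<circ> (\<lambda>w. (x w, h w, a w)) \<in> borel_measurable N"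
    by (rule measurable_comp[OF _ pol_meas[OF i]]) measurable
  then show ?thesis by (simp add: o_def)
qed

lemma muhat_comp:
  assumes i: "i < n" and [measurable]: "h \<in> measurable N (histM LX LA i)" "x \<in> measurable N LX" "a \<in> measurable N LA"
  shows "(\<lambda>w. muhat i (h w) (x w) (a w)) \<in> borel_measurable N"
proof -
  have "(\<lambda>(h, x, a). muhat i h x a) \<circ> (\<lambda>w. (h w, x w, a w)) \<in> borel_measurable N"
    by (rule measurable_comp[OF _ muhat_meas[OF i]]) measurable
  then show ?thesis by (simp add: o_def)
qed

lemma innerhat_meas:
  assumes i: "i < n"
  shows "(\<lambda>(h, x). inner_A LA (g x) (muhat i h x)) \<in> borel_measurable (histM LX LA i \<Otimes>\<^sub>M LX)"
proof -
  note [measurable] = muhat_comp[OF i]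
  show ?thesis unfolding inner_A_def case_prod_beta
    by (rule sigma_finite_measure.borel_measurable_lebesgue_integral[OF sf_A]) measurable
qed

lemma innerhat_comp:
  assumes i: "i < n" and [measurable]: "h \<in> measurable N (histM LX LA i)" "x \<in> measurable N LX"
  shows "(\<lambda>w. inner_A LA (g (x w)) (muhat i (h w) (x w))) \<in> borel_measurable N"
proof -
  have "(\<lambda>(h, x). inner_A LA (g x) (muhat i h x)) \<circ> (\<lambda>w. (h w, x w)) \<in> borel_measurable N"
    by (rule measurable_comp[OF _ innerhat_meas[OF i]]) measurable
  then show ?thesis by (simp add: o_def)
qed

lemma test1:
  assumes i: "i < n"
  shows "(\<lambda>(h, x, a). cf i h x a) \<in> borel_measurable (histM LX LA i \<Otimes>\<^sub>M LX \<Otimes>\<^sub>M LA)"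
proof -
  note [measurable] = pol_comp[OF i]
  show ?thesis unfolding cf_def by measurable
qed

lemma test2:
  assumes i: "i < n"
  shows "(\<lambda>(h, x, a). Vf i h x a) \<in> borel_measurable (histM LX LA i \<Otimes>\<^sub>M LX \<Otimes>\<^sub>M LA)"
proof -
  note [measurable] = pol_comp[OF i] muhat_comp[OF i] innerhat_comp[OF i]
  show ?thesis unfolding cf_def af_def Vf_def bf_def by measurable
qed


lemma cf_comp:
  assumes i: "i < n" and [measurable]: "h \<in> measurable N (histM LX LA i)" "x \<in> measurable N LX" "a \<in> measurable N LA"
  shows "(\<lambda>w. cf i (h w) (x w) (a w)) \<in> borel_measurable N"
proof -
  note [measurable] = pol_comp[OF i]
  show ?thesis unfolding cf_def by measurable
qed

lemma af_comp:
  assumes i: "i < n" and [measurable]: "h \<in> measurable N (histM LX LA i)" "x \<in> measurable N LX" "a \<in> measurable N LA"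
  shows "(\<lambda>w. af i (h w) (x w) (a w)) \<in> borel_measurable N"
proof -
  note [measurable] = cf_comp[OF i] muhat_comp[OF i]
  show ?thesis unfolding af_def by measurable
qed

lemma bf_comp:
  assumes i: "i < n" and [measurable]: "h \<in> measurable N (histM LX LA i)" "x \<in> measurable N LX"
  shows "(\<lambda>w. bf i (h w) (x w)) \<in> borel_measurable N"
proof -
  note [measurable] = innerhat_comp[OF i]
  show ?thesis unfolding bf_def by measurable
qed

lemma Vf_comp:
  assumes i: "i < n" and [measurable]: "h \<in> measurable N (histM LX LA i)" "x \<in> measurable N LX" "a \<in> measurable N LA"
  shows "(\<lambda>w. Vf i (h w) (x w) (a w)) \<in> borel_measurable N"
proof -
  note [measurable] = af_comp[OF i] bf_comp[OF i]
  show ?thesis unfolding Vf_def by measurable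
qed

lemma Uf_comp:
  assumes i: "i < n" and [measurable]: "h \<in> measurable N (histM LX LA i)" "x \<in> measurable N LX" "a \<in> measurable N LA"
    "y \<in> borel_measurable N"
  shows "(\<lambda>w. Uf i (h w) (x w) (a w) (y w)) \<in> borel_measurable N"
proof -
  note [measurable] = cf_comp[OF i]
  show ?thesis unfolding Uf_def by measurable
qed

lemma Wf_comp:
  assumes [measurable]: "x \<in> measurable N LX"
  shows "(\<lambda>w. Wf (x w)) \<in> borel_measurable N"
  unfolding Wf_def by measurable

definition "Ur i w = Uf i (hist X A Y i w) (X i w) (A i w) (Y i w)"
definition "Vr i w = Vf i (hist X A Y i w) (X i w) (A i w)"
definition "ar i w = af i (hist X A Y i w) (X i w) (A i w)"
definition "br i w = bf i (hist X A Y i w) (X i w)"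
definition "Wr i w = Wf (X i w)"
definition "Dr i w = aipw_score LA g pol muhat X A Y i w - tau Xi LA Gam g"

lemma rv_meas:
  assumes i: "i < n"
  shows "Ur i \<in> borel_measurable M" "Vr i \<in> borel_measurable M" "ar i \<in> borel_measurable M"
    "br i \<in> borel_measurable M" "Wr i \<in> borel_measurable M"
proof -
  note [measurable] = hist_meas[of i] X_meas[OF i] A_meas[OF i] Y_meas[OF i]
    Uf_comp[OF i] Vf_comp[OF i] af_comp[OF i] bf_comp[OF i] Wf_comp
  have "i \<le> n" using i by simp
  then show "Ur i \<in> borel_measurable M" "Vr i \<in> borel_measurable M" "ar i \<in> borel_measurable M"
    "br i \<in> borel_measurable M" "Wr i \<in> borel_measurable M"
    unfolding Ur_def Vr_def ar_def br_def Wr_def by measurable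
qed

lemma D_decomp: "Dr i w = Ur i w + Vr i w + Wr i w"
  unfolding Dr_def Ur_def Vr_def Wr_def aipw_score_def Uf_def Vf_def af_def bf_def Wf_def cf_def[symmetric]
  by (simp add: algebra_simps)

lemma V_decomp: "Vr i w = ar i w + br i w"
  unfolding Vr_def ar_def br_def Vf_def by simp

lemma D_meas: "i < n \<Longrightarrow> Dr i \<in> borel_measurable M"
  using rv_meas[of i] by (simp add: D_decomp[abs_def])


lemma space_H: "space (distr M (histM LX LA i) (hist X A Y i)) = space (histM LX LA i)"
  by simp

lemma space_Xi: "space Xi = space LX"
  by (rule sets_eq_imp_space_eq[OF Xi_sets])

lemma pol_meas_a:
  assumes i: "i < n" and h: "h \<in> space (histM LX LA i)" and x: "x \<in> space LX"
  shows "(\<lambda>a. pol i x h a) \<in> borel_measurable LA"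
proof -
  note [measurable] = pol_comp[OF i]
  show ?thesis using h x by measurable
qed

lemma pol_int:
  assumes i: "i < n" and h: "h \<in> space (histM LX LA i)" and x: "x \<in> space LX"
  shows "integrable LA (\<lambda>a. pol i x h a)" "(\<integral>a. pol i x h a \<partial>LA) = 1"
proof -
  have m: "(\<lambda>a. pol i x h a) \<in> borel_measurable LA" by (rule pol_meas_a[OF i h x])
  have pos: "AE a in LA. 0 \<le> pol i x h a"
    using pol_pos[OF i x h] by (auto intro!: AE_I2 less_imp_le)
  have nn: "(\<integral>\<^sup>+a. ennreal (pol i x h a) \<partial>LA) = ennreal 1" using pol_norm[OF i x h] by simp
  show "integrable LA (\<lambda>a. pol i x h a)"
    by (rule integrableI_nn_integral_finite[OF m pos nn])
  show "(\<integral>a. pol i x h a \<partial>LA) = 1"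
    using integral_eq_nn_integral[OF m pos] nn by simp
qed

lemma pol_nn_const:
  assumes i: "i < n" and h: "h \<in> space (histM LX LA i)" and x: "x \<in> space LX"
  shows "(\<integral>\<^sup>+a. ennreal (pol i x h a) * c \<partial>LA) = c"
  using pol_meas_a[OF i h x] pol_norm[OF i x h] by (simp add: nn_integral_multc)

lemma cross_a:
  fixes F :: "(nat \<Rightarrow> 'x \<times> 'a \<times> real) \<Rightarrow> 'x \<Rightarrow> 'a \<Rightarrow> real"
  assumes i: "i < n"
    and Fm: "(\<lambda>(h, x, a). F h x a) \<in> borel_measurable (histM LX LA i \<Otimes>\<^sub>M LX \<Otimes>\<^sub>M LA)"
    and Fi: "integrable M (\<lambda>w. F (hist X A Y i w) (X i w) (A i w))"
    and pt: "\<And>h x. h \<in> space (histM LX LA i) \<Longrightarrow> x \<in> space LX \<Longrightarrow>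
       integrable LA (\<lambda>a. pol i x h a * F h x a) \<and> (\<integral>a. pol i x h a * F h x a \<partial>LA) = 0"
  shows "(\<integral>w. F (hist X A Y i w) (X i w) (A i w) \<partial>M) = 0"
proof -
  have m1: "(\<lambda>p. ennreal ((\<lambda>(h, x, a). F h x a) p)) \<in> borel_measurable (histM LX LA i \<Otimes>\<^sub>M LX \<Otimes>\<^sub>M LA)"
    using Fm by measurable
  have m2: "(\<lambda>p. ennreal (- (\<lambda>(h, x, a). F h x a) p)) \<in> borel_measurable (histM LX LA i \<Otimes>\<^sub>M LX \<Otimes>\<^sub>M LA)"
    using Fm by measurable
  have "(\<integral>\<^sup>+w. ennreal (F (hist X A Y i w) (X i w) (A i w)) \<partial>M)
     = (\<integral>\<^sup>+h. \<integral>\<^sup>+x. \<integral>\<^sup>+a. ennreal (pol i x h a) * ennreal (F h x a) \<partial>LA \<partial>Xi \<partial>distr M (histM LX LA i) (hist X A Y i))"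
    using LAW3[OF i m1] by simp
  also have "\<dots> = (\<integral>\<^sup>+h. \<integral>\<^sup>+x. \<integral>\<^sup>+a. ennreal (pol i x h a) * ennreal (- F h x a) \<partial>LA \<partial>Xi \<partial>distr M (histM LX LA i) (hist X A Y i))"
  proof (rule nn_integral_cong, rule nn_integral_cong)
    fix h x assume h: "h \<in> space (distr M (histM LX LA i) (hist X A Y i))" and x: "x \<in> space Xi"
    have h': "h \<in> space (histM LX LA i)" and x': "x \<in> space LX" using h x by (simp_all add: space_Xi)
    have "(\<integral>\<^sup>+a. ennreal (pol i x h a) * ennreal (F h x a) \<partial>LA) = (\<integral>\<^sup>+a. ennreal (pol i x h a * F h x a) \<partial>LA)"
      by (intro nn_integral_cong) (simp add: ennreal_mult' less_imp_le[OF pol_pos[OF i x' h']])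
    also have "\<dots> = (\<integral>\<^sup>+a. ennreal (- (pol i x h a * F h x a)) \<partial>LA)"
      using pt[OF h' x'] by (intro nn_pos_neg_eq) auto
    also have "\<dots> = (\<integral>\<^sup>+a. ennreal (pol i x h a) * ennreal (- F h x a) \<partial>LA)"
      by (intro nn_integral_cong) (simp add: ennreal_mult'[symmetric] less_imp_le[OF pol_pos[OF i x' h']])
    finally show "(\<integral>\<^sup>+a. ennreal (pol i x h a) * ennreal (F h x a) \<partial>LA) = (\<integral>\<^sup>+a. ennreal (pol i x h a) * ennreal (- F h x a) \<partial>LA)" .
  qed
  also have "\<dots> = (\<integral>\<^sup>+w. ennreal (- F (hist X A Y i w) (X i w) (A i w)) \<partial>M)"
    using LAW3[OF i m2] by simp
  finally have eq: "(\<integral>\<^sup>+w. ennreal (F (hist X A Y i w) (X i w) (A i w)) \<partial>M) = (\<integral>\<^sup>+w. ennreal (- F (hist X A Y i w) (X i w) (A i w)) \<partial>M)" .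
  show ?thesis by (rule int_zero_of_nn[OF Fi eq])
qed

lemma cross_x:
  fixes F :: "(nat \<Rightarrow> 'x \<times> 'a \<times> real) \<Rightarrow> 'x \<Rightarrow> real"
  assumes i: "i < n"
    and Fm: "(\<lambda>(h, x). F h x) \<in> borel_measurable (histM LX LA i \<Otimes>\<^sub>M LX)"
    and Fi: "integrable M (\<lambda>w. F (hist X A Y i w) (X i w))"
    and pt: "\<And>h. h \<in> space (histM LX LA i) \<Longrightarrow> integrable Xi (F h) \<and> (\<integral>x. F h x \<partial>Xi) = 0"
  shows "(\<integral>w. F (hist X A Y i w) (X i w) \<partial>M) = 0"
proof -
  have m1: "(\<lambda>p. ennreal ((\<lambda>(h, x, a). F h x) p)) \<in> borel_measurable (histM LX LA i \<Otimes>\<^sub>M LX \<Otimes>\<^sub>M LA)"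
    using Fm by measurable
  have m2: "(\<lambda>p. ennreal (- (\<lambda>(h, x, a). F h x) p)) \<in> borel_measurable (histM LX LA i \<Otimes>\<^sub>M LX \<Otimes>\<^sub>M LA)"
    using Fm by measurable
  have "(\<integral>\<^sup>+w. ennreal (F (hist X A Y i w) (X i w)) \<partial>M)
     = (\<integral>\<^sup>+h. \<integral>\<^sup>+x. \<integral>\<^sup>+a. ennreal (pol i x h a) * ennreal (F h x) \<partial>LA \<partial>Xi \<partial>distr M (histM LX LA i) (hist X A Y i))"
    using LAW3[OF i m1] by simp
  also have "\<dots> = (\<integral>\<^sup>+h. \<integral>\<^sup>+x. \<integral>\<^sup>+a. ennreal (pol i x h a) * ennreal (- F h x) \<partial>LA \<partial>Xi \<partial>distr M (histM LX LA i) (hist X A Y i))"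
  proof (rule nn_integral_cong)
    fix h assume h: "h \<in> space (distr M (histM LX LA i) (hist X A Y i))"
    have h': "h \<in> space (histM LX LA i)" using h by simp
    have "(\<integral>\<^sup>+x. \<integral>\<^sup>+a. ennreal (pol i x h a) * ennreal (F h x) \<partial>LA \<partial>Xi) = (\<integral>\<^sup>+x. ennreal (F h x) \<partial>Xi)"
      by (intro nn_integral_cong) (simp add: pol_nn_const[OF i h'] space_Xi)
    also have "\<dots> = (\<integral>\<^sup>+x. ennreal (- F h x) \<partial>Xi)"
      using pt[OF h'] by (intro nn_pos_neg_eq) auto
    also have "\<dots> = (\<integral>\<^sup>+x. \<integral>\<^sup>+a. ennreal (pol i x h a) * ennreal (- F h x) \<partial>LA \<partial>Xi)"
      by (intro nn_integral_cong) (simp add: pol_nn_const[OF i h'] space_Xi)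
    finally show "(\<integral>\<^sup>+x. \<integral>\<^sup>+a. ennreal (pol i x h a) * ennreal (F h x) \<partial>LA \<partial>Xi) = (\<integral>\<^sup>+x. \<integral>\<^sup>+a. ennreal (pol i x h a) * ennreal (- F h x) \<partial>LA \<partial>Xi)" .
  qed
  also have "\<dots> = (\<integral>\<^sup>+w. ennreal (- F (hist X A Y i w) (X i w)) \<partial>M)"
    using LAW3[OF i m2] by simp
  finally have eq: "(\<integral>\<^sup>+w. ennreal (F (hist X A Y i w) (X i w)) \<partial>M) = (\<integral>\<^sup>+w. ennreal (- F (hist X A Y i w) (X i w)) \<partial>M)" .
  show ?thesis by (rule int_zero_of_nn[OF Fi eq])
qed

lemma cross_y:
  fixes F :: "(nat \<Rightarrow> 'x \<times> 'a \<times> real) \<Rightarrow> 'x \<Rightarrow> 'a \<Rightarrow> real \<Rightarrow> real"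
  assumes i: "i < n"
    and Fm: "(\<lambda>(h, x, a, y). F h x a y) \<in> borel_measurable (histM LX LA i \<Otimes>\<^sub>M LX \<Otimes>\<^sub>M LA \<Otimes>\<^sub>M borel)"
    and Fi: "integrable M (\<lambda>w. F (hist X A Y i w) (X i w) (A i w) (Y i w))"
    and pt: "\<And>h x a. h \<in> space (histM LX LA i) \<Longrightarrow> x \<in> space LX \<Longrightarrow> a \<in> space LA \<Longrightarrow>
       integrable (Gam x a) (F h x a) \<and> (\<integral>y. F h x a y \<partial>Gam x a) = 0"
  shows "(\<integral>w. F (hist X A Y i w) (X i w) (A i w) (Y i w) \<partial>M) = 0"
proof -
  have m1: "(\<lambda>p. ennreal ((\<lambda>(h, x, a, y). F h x a y) p)) \<in> borel_measurable (histM LX LA i \<Otimes>\<^sub>M LX \<Otimes>\<^sub>M LA \<Otimes>\<^sub>M borel)"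
    using Fm by measurable
  have m2: "(\<lambda>p. ennreal (- (\<lambda>(h, x, a, y). F h x a y) p)) \<in> borel_measurable (histM LX LA i \<Otimes>\<^sub>M LX \<Otimes>\<^sub>M LA \<Otimes>\<^sub>M borel)"
    using Fm by measurable
  have hm: "hist X A Y i \<in> measurable M (histM LX LA i)" using i by (intro hist_meas) simp
  have "(\<integral>\<^sup>+w. ennreal (F (hist X A Y i w) (X i w) (A i w) (Y i w)) \<partial>M)
     = (\<integral>\<^sup>+w. \<integral>\<^sup>+y. ennreal (F (hist X A Y i w) (X i w) (A i w) y) \<partial>Gam (X i w) (A i w) \<partial>M)"
    using LAW4[OF i m1] by simp
  also have "\<dots> = (\<integral>\<^sup>+w. \<integral>\<^sup>+y. ennreal (- F (hist X A Y i w) (X i w) (A i w) y) \<partial>Gam (X i w) (A i w) \<partial>M)"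
  proof (rule nn_integral_cong)
    fix w assume w: "w \<in> space M"
    have "hist X A Y i w \<in> space (histM LX LA i)" "X i w \<in> space LX" "A i w \<in> space LA"
      using measurable_space[OF hm w] measurable_space[OF X_meas[OF i] w] measurable_space[OF A_meas[OF i] w] by auto
    from pt[OF this] show "(\<integral>\<^sup>+y. ennreal (F (hist X A Y i w) (X i w) (A i w) y) \<partial>Gam (X i w) (A i w))
       = (\<integral>\<^sup>+y. ennreal (- F (hist X A Y i w) (X i w) (A i w) y) \<partial>Gam (X i w) (A i w))"
      by (intro nn_pos_neg_eq) auto
  qed
  also have "\<dots> = (\<integral>\<^sup>+w. ennreal (- F (hist X A Y i w) (X i w) (A i w) (Y i w)) \<partial>M)"
    using LAW4[OF i m2] by simp
  finally have eq: "(\<integral>\<^sup>+w. ennreal (F (hist X A Y i w) (X i w) (A i w) (Y i w)) \<partial>M) = (\<integral>\<^sup>+w. ennreal (- F (hist X A Y i w) (X i w) (A i w) (Y i w)) \<partial>M)" .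
  show ?thesis by (rule int_zero_of_nn[OF Fi eq])
qed


lemma spaces_at:
  assumes i: "i < n" and w: "w \<in> space M"
  shows "hist X A Y i w \<in> space (histM LX LA i)" "X i w \<in> space LX" "A i w \<in> space LA"
proof -
  have hm: "hist X A Y i \<in> measurable M (histM LX LA i)" using i by (intro hist_meas) simp
  show "hist X A Y i w \<in> space (histM LX LA i)" "X i w \<in> space LX" "A i w \<in> space LA"
    using measurable_space[OF hm w] measurable_space[OF X_meas[OF i] w] measurable_space[OF A_meas[OF i] w] by auto
qed

lemma a_sq_eq: "(ar i w)\<^sup>2 = (g (X i w) (A i w))\<^sup>2
          * (muhat i (hist X A Y i w) (X i w) (A i w) - mu_star Gam (X i w) (A i w))\<^sup>2
          / (pol i (X i w) (hist X A Y i w) (A i w))\<^sup>2"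
  unfolding ar_def af_def cf_def by (simp add: power_mult_distrib power_divide power2_commute)

lemma a_sq_int: "i < n \<Longrightarrow> integrable M (\<lambda>w. (ar i w)\<^sup>2)"
  using int_err[of i] by (simp add: a_sq_eq)

lemma gmu_int_a:
  assumes i: "i < n" and h: "h \<in> space (histM LX LA i)" and x: "x \<in> space LX"
  shows "integrable LA (\<lambda>a. pol i x h a * af i h x a)"
    "(\<integral>a. pol i x h a * af i h x a \<partial>LA) = - bf i h x"
proof -
  have eq: "\<And>a. a \<in> space LA \<Longrightarrow> pol i x h a * af i h x a = g x a * mu_star Gam x a - g x a * muhat i h x a"
  proof -
    fix a assume a: "a \<in> space LA"
    have "pol i x h a \<noteq> 0" using pol_pos[OF i x h a] by simp
    then show "pol i x h a * af i h x a = g x a * mu_star Gam x a - g x a * muhat i h x a"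
      unfolding af_def cf_def by (simp add: algebra_simps)
  qed
  have ii: "integrable LA (\<lambda>a. g x a * mu_star Gam x a - g x a * muhat i h x a)"
    using int_gmu[OF x] int_gmuhat[OF i h x] by simp
  show "integrable LA (\<lambda>a. pol i x h a * af i h x a)"
    using ii by (subst Bochner_Integration.integrable_cong[OF refl eq]) auto
  have "(\<integral>a. pol i x h a * af i h x a \<partial>LA) = (\<integral>a. g x a * mu_star Gam x a - g x a * muhat i h x a \<partial>LA)"
    using eq by (rule Bochner_Integration.integral_cong[OF refl])
  also have "\<dots> = - bf i h x"
    using int_gmu[OF x] int_gmuhat[OF i h x] by (simp add: bf_def inner_A_def)
  finally show "(\<integral>a. pol i x h a * af i h x a \<partial>LA) = - bf i h x" .
qed

lemma b_pt:
  assumes i: "i < n" and h: "h \<in> space (histM LX LA i)" and x: "x \<in> space LX"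
  shows "ennreal ((bf i h x)\<^sup>2) \<le> (\<integral>\<^sup>+a. ennreal (pol i x h a) * ennreal ((af i h x a)\<^sup>2) \<partial>LA)"
proof -
  note [measurable] = af_comp[OF i]
  have hc: "(\<lambda>a. h) \<in> measurable LA (histM LX LA i)" using h by simp
  have xc: "(\<lambda>a. x) \<in> measurable LA LX" using x by simp
  have am: "(\<lambda>a. af i h x a) \<in> borel_measurable LA"
    using af_comp[OF i hc xc measurable_ident_sets[OF refl]] by simp
  have "ennreal ((\<integral>a. pol i x h a * af i h x a \<partial>LA)\<^sup>2) \<le> (\<integral>\<^sup>+a. ennreal (pol i x h a) * ennreal ((af i h x a)\<^sup>2) \<partial>LA)"
    by (rule cs_density[OF pol_meas_a[OF i h x] am _ pol_norm[OF i x h]]) (use pol_pos[OF i x h] in \<open>simp add: less_imp_le\<close>)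
  then show ?thesis using gmu_int_a(2)[OF i h x] by simp
qed


lemma b_nn_le:
  assumes i: "i < n"
  shows "(\<integral>\<^sup>+w. ennreal ((br i w)\<^sup>2) \<partial>M) \<le> (\<integral>\<^sup>+w. ennreal ((ar i w)\<^sup>2) \<partial>M)"
proof -
  note [measurable] = bf_comp[OF i] af_comp[OF i]
  let ?H = "distr M (histM LX LA i) (hist X A Y i)"
  have m1: "(\<lambda>(h, x, a). ennreal ((bf i h x)\<^sup>2)) \<in> borel_measurable (histM LX LA i \<Otimes>\<^sub>M LX \<Otimes>\<^sub>M LA)"
    by measurable
  have m2: "(\<lambda>(h, x, a). ennreal ((af i h x a)\<^sup>2)) \<in> borel_measurable (histM LX LA i \<Otimes>\<^sub>M LX \<Otimes>\<^sub>M LA)"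
    by measurable
  have "(\<integral>\<^sup>+w. ennreal ((br i w)\<^sup>2) \<partial>M) = (\<integral>\<^sup>+h. \<integral>\<^sup>+x. \<integral>\<^sup>+a. ennreal (pol i x h a) * ennreal ((bf i h x)\<^sup>2) \<partial>LA \<partial>Xi \<partial>?H)"
    using LAW3[OF i m1] by (simp add: br_def)
  also have "\<dots> \<le> (\<integral>\<^sup>+h. \<integral>\<^sup>+x. \<integral>\<^sup>+a. ennreal (pol i x h a) * ennreal ((af i h x a)\<^sup>2) \<partial>LA \<partial>Xi \<partial>?H)"
  proof (rule nn_integral_mono, rule nn_integral_mono)
    fix h x assume h: "h \<in> space ?H" and x: "x \<in> space Xi"
    have h': "h \<in> space (histM LX LA i)" and x': "x \<in> space LX" using h x by (simp_all add: space_Xi)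
    show "(\<integral>\<^sup>+a. ennreal (pol i x h a) * ennreal ((bf i h x)\<^sup>2) \<partial>LA) \<le> (\<integral>\<^sup>+a. ennreal (pol i x h a) * ennreal ((af i h x a)\<^sup>2) \<partial>LA)"
      using b_pt[OF i h' x'] by (simp add: pol_nn_const[OF i h' x'])
  qed
  also have "\<dots> = (\<integral>\<^sup>+w. ennreal ((ar i w)\<^sup>2) \<partial>M)"
    using LAW3[OF i m2] by (simp add: ar_def)
  finally show ?thesis .
qed

lemma b_sq:
  assumes i: "i < n"
  shows "integrable M (\<lambda>w. (br i w)\<^sup>2)" "(\<integral>w. (br i w)\<^sup>2 \<partial>M) \<le> (\<integral>w. (ar i w)\<^sup>2 \<partial>M)"
proof -
  have bm: "br i \<in> borel_measurable M" using rv_meas[OF i] by simp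
  have ea: "(\<integral>\<^sup>+w. ennreal ((ar i w)\<^sup>2) \<partial>M) = ennreal (\<integral>w. (ar i w)\<^sup>2 \<partial>M)"
    by (rule nn_integral_eq_integral[OF a_sq_int[OF i]]) simp
  have le: "(\<integral>\<^sup>+w. ennreal ((br i w)\<^sup>2) \<partial>M) \<le> ennreal (\<integral>w. (ar i w)\<^sup>2 \<partial>M)"
    using b_nn_le[OF i] ea by simp
  show bi: "integrable M (\<lambda>w. (br i w)\<^sup>2)"
    by (rule integrableI_nonneg) (use bm le in \<open>auto intro: le_less_trans\<close>)
  have "ennreal (\<integral>w. (br i w)\<^sup>2 \<partial>M) = (\<integral>\<^sup>+w. ennreal ((br i w)\<^sup>2) \<partial>M)"
    by (rule nn_integral_eq_integral[OF bi, symmetric]) simp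
  with le have "ennreal (\<integral>w. (br i w)\<^sup>2 \<partial>M) \<le> ennreal (\<integral>w. (ar i w)\<^sup>2 \<partial>M)" by simp
  then show "(\<integral>w. (br i w)\<^sup>2 \<partial>M) \<le> (\<integral>w. (ar i w)\<^sup>2 \<partial>M)"
    by (subst (asm) ennreal_le_iff) (auto intro!: integral_nonneg_AE)
qed

lemma W_Xi: "integrable Xi (\<lambda>x. (Wf x)\<^sup>2)" "integrable Xi Wf" "(\<integral>x. Wf x \<partial>Xi) = 0"
proof -
  interpret Xp: prob_space Xi by (rule Xi_prob)
  let ?f = "\<lambda>x. inner_A LA (g x) (mu_star Gam x)"
  have e: "\<And>x. (Wf x)\<^sup>2 = (?f x)\<^sup>2 - 2 * tau Xi LA Gam g * ?f x + (tau Xi LA Gam g)\<^sup>2"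
    unfolding Wf_def by (simp add: power2_diff)
  show "integrable Xi (\<lambda>x. (Wf x)\<^sup>2)" unfolding e using int_var int_tau by simp
  show "integrable Xi Wf" unfolding Wf_def using int_tau by simp
  show "(\<integral>x. Wf x \<partial>Xi) = 0" unfolding Wf_def using int_tau by (simp add: tau_def Xp.prob_space)
qed

lemma W_sq:
  assumes i: "i < n"
  shows "integrable M (\<lambda>w. (Wr i w)\<^sup>2)" "(\<integral>w. (Wr i w)\<^sup>2 \<partial>M) = (\<integral>x. (Wf x)\<^sup>2 \<partial>Xi)"
proof -
  note [measurable] = Wf_comp
  let ?H = "distr M (histM LX LA i) (hist X A Y i)"
  interpret Hp: prob_space ?H using H_prob[of i] i by simp
  have wm: "Wr i \<in> borel_measurable M" using rv_meas[OF i] by simp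
  have m1: "(\<lambda>(h, x, a). ennreal ((Wf x)\<^sup>2)) \<in> borel_measurable (histM LX LA i \<Otimes>\<^sub>M LX \<Otimes>\<^sub>M LA)"
    by measurable
  have WXm: "(\<lambda>x. ennreal ((Wf x)\<^sup>2)) \<in> borel_measurable Xi"
    by (simp add: measurable_cong_sets[OF Xi_sets refl])
  have "(\<integral>\<^sup>+w. ennreal ((Wr i w)\<^sup>2) \<partial>M) = (\<integral>\<^sup>+h. \<integral>\<^sup>+x. \<integral>\<^sup>+a. ennreal (pol i x h a) * ennreal ((Wf x)\<^sup>2) \<partial>LA \<partial>Xi \<partial>?H)"
    using LAW3[OF i m1] by (simp add: Wr_def)
  also have "\<dots> = (\<integral>\<^sup>+h. \<integral>\<^sup>+x. ennreal ((Wf x)\<^sup>2) \<partial>Xi \<partial>?H)"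
    by (intro nn_integral_cong) (simp add: pol_nn_const[OF i] space_Xi)
  also have "\<dots> = (\<integral>\<^sup>+x. ennreal ((Wf x)\<^sup>2) \<partial>Xi)"
    using Hp.emeasure_space_1 by simp
  also have "\<dots> = ennreal (\<integral>x. (Wf x)\<^sup>2 \<partial>Xi)"
    by (rule nn_integral_eq_integral[OF W_Xi(1)]) simp
  finally have nn: "(\<integral>\<^sup>+w. ennreal ((Wr i w)\<^sup>2) \<partial>M) = ennreal (\<integral>x. (Wf x)\<^sup>2 \<partial>Xi)" .
  show wi: "integrable M (\<lambda>w. (Wr i w)\<^sup>2)"
    by (rule integrableI_nonneg) (use wm nn in auto)
  have "ennreal (\<integral>w. (Wr i w)\<^sup>2 \<partial>M) = ennreal (\<integral>x. (Wf x)\<^sup>2 \<partial>Xi)"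
    using nn_integral_eq_integral[OF wi] nn by simp
  then show "(\<integral>w. (Wr i w)\<^sup>2 \<partial>M) = (\<integral>x. (Wf x)\<^sup>2 \<partial>Xi)"
    by (subst (asm) ennreal_inj) (auto intro!: integral_nonneg_AE)
qed


lemma Gam_facts:
  assumes x: "x \<in> space LX" and a: "a \<in> space LA"
  shows "sets (Gam x a) = sets borel" "integrable (Gam x a) (\<lambda>y. y)"
    "integrable (Gam x a) (\<lambda>y. (y - mu_star Gam x a)\<^sup>2)"
    "(\<integral>y. (y - mu_star Gam x a)\<^sup>2 \<partial>Gam x a) = sigma2 Gam x a"
    "0 \<le> sigma2 Gam x a"
proof -
  interpret G: prob_space "Gam x a" by (rule Gam_prob[OF x a])
  show s: "sets (Gam x a) = sets borel"
    using measurable_space[OF Gam_kernel, of "(x, a)"] x a by (simp add: space_pair_measure space_subprob_algebra)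
  have ym: "(\<lambda>y::real. y) \<in> borel_measurable (Gam x a)" by (simp add: measurable_cong_sets[OF s refl])
  show yi: "integrable (Gam x a) (\<lambda>y. y)"
    by (rule G.square_integrable_imp_integrable[OF ym Gam_sq[OF x a]])
  have e: "\<And>y. (y - mu_star Gam x a)\<^sup>2 = y\<^sup>2 - 2 * mu_star Gam x a * y + (mu_star Gam x a)\<^sup>2"
    by (simp add: power2_diff)
  show "integrable (Gam x a) (\<lambda>y. (y - mu_star Gam x a)\<^sup>2)"
    unfolding e using yi Gam_sq[OF x a] by simp
  show "(\<integral>y. (y - mu_star Gam x a)\<^sup>2 \<partial>Gam x a) = sigma2 Gam x a" by (simp add: sigma2_def)
  show "0 \<le> sigma2 Gam x a" unfolding sigma2_def by (rule integral_nonneg_AE) simp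
qed

lemma U_pt:
  assumes x: "x \<in> space LX" and a: "a \<in> space LA"
  shows "(\<integral>\<^sup>+y. ennreal ((Uf i h x a y)\<^sup>2) \<partial>Gam x a) = ennreal ((cf i h x a)\<^sup>2 * sigma2 Gam x a)"
proof -
  have i2: "integrable (Gam x a) (\<lambda>y. (cf i h x a)\<^sup>2 * (y - mu_star Gam x a)\<^sup>2)"
    using Gam_facts(3)[OF x a] by simp
  have "(\<integral>\<^sup>+y. ennreal ((Uf i h x a y)\<^sup>2) \<partial>Gam x a) = (\<integral>\<^sup>+y. ennreal ((cf i h x a)\<^sup>2 * (y - mu_star Gam x a)\<^sup>2) \<partial>Gam x a)"
    by (simp add: Uf_def power_mult_distrib)
  also have "\<dots> = ennreal (\<integral>y. (cf i h x a)\<^sup>2 * (y - mu_star Gam x a)\<^sup>2 \<partial>Gam x a)"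
    by (rule nn_integral_eq_integral[OF i2]) simp
  also have "\<dots> = ennreal ((cf i h x a)\<^sup>2 * sigma2 Gam x a)"
    using Gam_facts(4)[OF x a] by simp
  finally show ?thesis .
qed

lemma U_sq:
  assumes i: "i < n"
  shows "integrable M (\<lambda>w. (Ur i w)\<^sup>2)"
    "(\<integral>w. (Ur i w)\<^sup>2 \<partial>M) = (\<integral>w. (g (X i w) (A i w))\<^sup>2 * (sqrt (sigma2 Gam (X i w) (A i w)))\<^sup>2
          / (pol i (X i w) (hist X A Y i w) (A i w))\<^sup>2 \<partial>M)"
proof -
  note [measurable] = Uf_comp[OF i]
  let ?S = "\<lambda>w. (g (X i w) (A i w))\<^sup>2 * (sqrt (sigma2 Gam (X i w) (A i w)))\<^sup>2
          / (pol i (X i w) (hist X A Y i w) (A i w))\<^sup>2"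
  have um: "Ur i \<in> borel_measurable M" using rv_meas[OF i] by simp
  have m1: "(\<lambda>(h, x, a, y). ennreal ((Uf i h x a y)\<^sup>2)) \<in> borel_measurable (histM LX LA i \<Otimes>\<^sub>M LX \<Otimes>\<^sub>M LA \<Otimes>\<^sub>M borel)"
    by measurable
  have Snn: "\<And>w. 0 \<le> ?S w" by simp
  have "(\<integral>\<^sup>+w. ennreal ((Ur i w)\<^sup>2) \<partial>M) = (\<integral>\<^sup>+w. \<integral>\<^sup>+y. ennreal ((Uf i (hist X A Y i w) (X i w) (A i w) y)\<^sup>2) \<partial>Gam (X i w) (A i w) \<partial>M)"
    using LAW4[OF i m1] by (simp add: Ur_def)
  also have "\<dots> = (\<integral>\<^sup>+w. ennreal (?S w) \<partial>M)"
  proof (rule nn_integral_cong)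
    fix w assume w: "w \<in> space M"
    note sp = spaces_at[OF i w]
    have "(cf i (hist X A Y i w) (X i w) (A i w))\<^sup>2 * sigma2 Gam (X i w) (A i w) = ?S w"
      using Gam_facts(5)[OF sp(2,3)] by (simp add: cf_def power_divide)
    then show "(\<integral>\<^sup>+y. ennreal ((Uf i (hist X A Y i w) (X i w) (A i w) y)\<^sup>2) \<partial>Gam (X i w) (A i w)) = ennreal (?S w)"
      using U_pt[OF sp(2,3)] by simp
  qed
  also have "\<dots> = ennreal (\<integral>w. ?S w \<partial>M)"
    by (rule nn_integral_eq_integral[OF int_sigma[OF i]]) simp
  finally have nn: "(\<integral>\<^sup>+w. ennreal ((Ur i w)\<^sup>2) \<partial>M) = ennreal (\<integral>w. ?S w \<partial>M)" .
  show ui: "integrable M (\<lambda>w. (Ur i w)\<^sup>2)"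
    by (rule integrableI_nonneg) (use um nn in auto)
  have "ennreal (\<integral>w. (Ur i w)\<^sup>2 \<partial>M) = ennreal (\<integral>w. ?S w \<partial>M)"
    using nn_integral_eq_integral[OF ui] nn by simp
  then show "(\<integral>w. (Ur i w)\<^sup>2 \<partial>M) = (\<integral>w. ?S w \<partial>M)"
    by (subst (asm) ennreal_inj) (auto intro!: integral_nonneg_AE)
qed


lemma y_pt:
  assumes x: "x \<in> space LX" and a: "a \<in> space LA"
  shows "integrable (Gam x a) (\<lambda>y. k * Uf i h x a y) \<and> (\<integral>y. k * Uf i h x a y \<partial>Gam x a) = 0"
proof -
  interpret G: prob_space "Gam x a" by (rule Gam_prob[OF x a])
  have yi: "integrable (Gam x a) (\<lambda>y. y)" by (rule Gam_facts(2)[OF x a])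
  have e: "\<And>y. k * Uf i h x a y = (k * cf i h x a) * y - (k * cf i h x a * mu_star Gam x a)"
    by (simp add: Uf_def algebra_simps)
  show ?thesis unfolding e using yi
    by (simp add: mu_star_def G.prob_space)
qed

lemma a_pt:
  assumes i: "i < n" and h: "h \<in> space (histM LX LA i)" and x: "x \<in> space LX"
  shows "integrable LA (\<lambda>a. pol i x h a * (k * Vf i h x a)) \<and> (\<integral>a. pol i x h a * (k * Vf i h x a) \<partial>LA) = 0"
proof -
  have e: "\<And>a. pol i x h a * (k * Vf i h x a) = k * (pol i x h a * af i h x a) + (k * bf i h x) * pol i x h a"
    by (simp add: Vf_def algebra_simps)
  show ?thesis unfolding e
    using gmu_int_a[OF i h x] pol_int[OF i h x] by simp
qed

lemma V_sq: "i < n \<Longrightarrow> integrable M (\<lambda>w. (Vr i w)\<^sup>2)"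
  unfolding V_decomp using rv_meas[of i] a_sq_int[of i] b_sq(1)[of i] by (intro int_sq_add) auto

lemma D_sq: "i < n \<Longrightarrow> integrable M (\<lambda>w. (Dr i w)\<^sup>2)"
proof -
  assume i: "i < n"
  note m = rv_meas[OF i]
  have "integrable M (\<lambda>w. (Ur i w + Vr i w)\<^sup>2)"
    using m U_sq(1)[OF i] V_sq[OF i] by (intro int_sq_add) auto
  then have "integrable M (\<lambda>w. ((Ur i w + Vr i w) + Wr i w)\<^sup>2)"
    using m by (intro int_sq_add[OF _ _ _ W_sq(1)[OF i]]) auto
  then show ?thesis by (simp add: D_decomp)
qed


lemma E_UV: assumes i: "i < n" shows "(\<integral>w. Vr i w * Ur i w \<partial>M) = 0"
proof -
  note [measurable] = Vf_comp[OF i] Uf_comp[OF i]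
  have "(\<integral>w. Vf i (hist X A Y i w) (X i w) (A i w) * Uf i (hist X A Y i w) (X i w) (A i w) (Y i w) \<partial>M) = 0"
  proof (rule cross_y[OF i, where F="\<lambda>h x a y. Vf i h x a * Uf i h x a y"])
    show "(\<lambda>(h, x, a, y). Vf i h x a * Uf i h x a y) \<in> borel_measurable (histM LX LA i \<Otimes>\<^sub>M LX \<Otimes>\<^sub>M LA \<Otimes>\<^sub>M borel)"
      by measurable
    show "integrable M (\<lambda>w. Vf i (hist X A Y i w) (X i w) (A i w) * Uf i (hist X A Y i w) (X i w) (A i w) (Y i w))"
      using int_prod[OF rv_meas(2,1)[OF i] V_sq[OF i] U_sq(1)[OF i]] by (simp add: Vr_def Ur_def)
  qed (use y_pt in auto)
  then show ?thesis by (simp add: Vr_def Ur_def)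
qed

lemma E_UW: assumes i: "i < n" shows "(\<integral>w. Wr i w * Ur i w \<partial>M) = 0"
proof -
  note [measurable] = Wf_comp Uf_comp[OF i]
  have "(\<integral>w. Wf (X i w) * Uf i (hist X A Y i w) (X i w) (A i w) (Y i w) \<partial>M) = 0"
  proof (rule cross_y[OF i, where F="\<lambda>h x a y. Wf x * Uf i h x a y"])
    show "(\<lambda>(h, x, a, y). Wf x * Uf i h x a y) \<in> borel_measurable (histM LX LA i \<Otimes>\<^sub>M LX \<Otimes>\<^sub>M LA \<Otimes>\<^sub>M borel)"
      by measurable
    show "integrable M (\<lambda>w. Wf (X i w) * Uf i (hist X A Y i w) (X i w) (A i w) (Y i w))"
      using int_prod[OF rv_meas(5,1)[OF i] W_sq(1)[OF i] U_sq(1)[OF i]] by (simp add: Wr_def Ur_def)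
  qed (use y_pt in auto)
  then show ?thesis by (simp add: Wr_def Ur_def)
qed

lemma E_VW: assumes i: "i < n" shows "(\<integral>w. Wr i w * Vr i w \<partial>M) = 0"
proof -
  note [measurable] = Wf_comp Vf_comp[OF i]
  have "(\<integral>w. Wf (X i w) * Vf i (hist X A Y i w) (X i w) (A i w) \<partial>M) = 0"
  proof (rule cross_a[OF i, where F="\<lambda>h x a. Wf x * Vf i h x a"])
    show "(\<lambda>(h, x, a). Wf x * Vf i h x a) \<in> borel_measurable (histM LX LA i \<Otimes>\<^sub>M LX \<Otimes>\<^sub>M LA)"
      by measurable
    show "integrable M (\<lambda>w. Wf (X i w) * Vf i (hist X A Y i w) (X i w) (A i w))"
      using int_prod[OF rv_meas(5,2)[OF i] W_sq(1)[OF i] V_sq[OF i]] by (simp add: Wr_def Vr_def)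
  qed (use a_pt[OF i] in auto)
  then show ?thesis by (simp add: Wr_def Vr_def)
qed

lemma E_bV: assumes i: "i < n" shows "(\<integral>w. br i w * Vr i w \<partial>M) = 0"
proof -
  note [measurable] = bf_comp[OF i] Vf_comp[OF i]
  have "(\<integral>w. bf i (hist X A Y i w) (X i w) * Vf i (hist X A Y i w) (X i w) (A i w) \<partial>M) = 0"
  proof (rule cross_a[OF i, where F="\<lambda>h x a. bf i h x * Vf i h x a"])
    show "(\<lambda>(h, x, a). bf i h x * Vf i h x a) \<in> borel_measurable (histM LX LA i \<Otimes>\<^sub>M LX \<Otimes>\<^sub>M LA)"
      by measurable
    show "integrable M (\<lambda>w. bf i (hist X A Y i w) (X i w) * Vf i (hist X A Y i w) (X i w) (A i w))"
      using int_prod[OF rv_meas(4,2)[OF i] b_sq(1)[OF i] V_sq[OF i]] by (simp add: br_def Vr_def)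
  qed (use a_pt[OF i] in auto)
  then show ?thesis by (simp add: br_def Vr_def)
qed

lemma E_V_sq: assumes i: "i < n" shows "(\<integral>w. (Vr i w)\<^sup>2 \<partial>M) \<le> (\<integral>w. (ar i w)\<^sup>2 \<partial>M)"
proof -
  note m = rv_meas[OF i]
  have ia: "integrable M (\<lambda>w. (ar i w)\<^sup>2)" by (rule a_sq_int[OF i])
  have ib: "integrable M (\<lambda>w. (br i w)\<^sup>2)" by (rule b_sq(1)[OF i])
  have iab: "integrable M (\<lambda>w. br i w * ar i w)" by (rule int_prod[OF m(4,3) ib ia])
  have "(\<integral>w. br i w * Vr i w \<partial>M) = (\<integral>w. br i w * ar i w + (br i w)\<^sup>2 \<partial>M)"
    by (simp add: V_decomp algebra_simps power2_eq_square)
  also have "\<dots> = (\<integral>w. br i w * ar i w \<partial>M) + (\<integral>w. (br i w)\<^sup>2 \<partial>M)"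
    using iab ib by simp
  finally have ba: "(\<integral>w. br i w * ar i w \<partial>M) = - (\<integral>w. (br i w)\<^sup>2 \<partial>M)" using E_bV[OF i] by simp
  have "(\<integral>w. (Vr i w)\<^sup>2 \<partial>M) = (\<integral>w. (ar i w)\<^sup>2 + 2 * (br i w * ar i w) + (br i w)\<^sup>2 \<partial>M)"
    by (simp add: V_decomp power2_sum algebra_simps)
  also have "\<dots> = (\<integral>w. (ar i w)\<^sup>2 \<partial>M) + 2 * (\<integral>w. br i w * ar i w \<partial>M) + (\<integral>w. (br i w)\<^sup>2 \<partial>M)"
    using ia ib iab by simp
  also have "\<dots> = (\<integral>w. (ar i w)\<^sup>2 \<partial>M) - (\<integral>w. (br i w)\<^sup>2 \<partial>M)" using ba by simp
  also have "\<dots> \<le> (\<integral>w. (ar i w)\<^sup>2 \<partial>M)"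
    by (simp add: integral_nonneg_AE)
  finally show ?thesis .
qed

lemma E_D_sq: assumes i: "i < n"
  shows "(\<integral>w. (Dr i w)\<^sup>2 \<partial>M) \<le> (\<integral>w. (Ur i w)\<^sup>2 \<partial>M) + (\<integral>w. (ar i w)\<^sup>2 \<partial>M) + (\<integral>w. (Wr i w)\<^sup>2 \<partial>M)"
proof -
  note m = rv_meas[OF i]
  have iU: "integrable M (\<lambda>w. (Ur i w)\<^sup>2)" by (rule U_sq(1)[OF i])
  have iV: "integrable M (\<lambda>w. (Vr i w)\<^sup>2)" by (rule V_sq[OF i])
  have iW: "integrable M (\<lambda>w. (Wr i w)\<^sup>2)" by (rule W_sq(1)[OF i])
  have iVU: "integrable M (\<lambda>w. Vr i w * Ur i w)" by (rule int_prod[OF m(2,1) iV iU])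
  have iWU: "integrable M (\<lambda>w. Wr i w * Ur i w)" by (rule int_prod[OF m(5,1) iW iU])
  have iWV: "integrable M (\<lambda>w. Wr i w * Vr i w)" by (rule int_prod[OF m(5,2) iW iV])
  have "(\<integral>w. (Dr i w)\<^sup>2 \<partial>M) = (\<integral>w. (Ur i w)\<^sup>2 + (Vr i w)\<^sup>2 + (Wr i w)\<^sup>2
        + 2 * (Vr i w * Ur i w) + 2 * (Wr i w * Ur i w) + 2 * (Wr i w * Vr i w) \<partial>M)"
    by (rule Bochner_Integration.integral_cong[OF refl]) (simp add: D_decomp power2_eq_square algebra_simps)
  also have "\<dots> = (\<integral>w. (Ur i w)\<^sup>2 \<partial>M) + (\<integral>w. (Vr i w)\<^sup>2 \<partial>M) + (\<integral>w. (Wr i w)\<^sup>2 \<partial>M)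
        + 2 * (\<integral>w. Vr i w * Ur i w \<partial>M) + 2 * (\<integral>w. Wr i w * Ur i w \<partial>M) + 2 * (\<integral>w. Wr i w * Vr i w \<partial>M)"
    using iU iV iW iVU iWU iWV by simp
  also have "\<dots> = (\<integral>w. (Ur i w)\<^sup>2 \<partial>M) + (\<integral>w. (Vr i w)\<^sup>2 \<partial>M) + (\<integral>w. (Wr i w)\<^sup>2 \<partial>M)"
    using E_UV[OF i] E_UW[OF i] E_VW[OF i] by simp
  also have "\<dots> \<le> (\<integral>w. (Ur i w)\<^sup>2 \<partial>M) + (\<integral>w. (ar i w)\<^sup>2 \<partial>M) + (\<integral>w. (Wr i w)\<^sup>2 \<partial>M)"
    using E_V_sq[OF i] by simp
  finally show ?thesis .
qed


definition "Psi j h = Uf j (restrict h {..<j}) (fst (h j)) (fst (snd (h j))) (snd (snd (h j)))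
   + Vf j (restrict h {..<j}) (fst (h j)) (fst (snd (h j))) + Wf (fst (h j))"

lemma hist_restrict: "j < i \<Longrightarrow> restrict (hist X A Y i w) {..<j} = hist X A Y j w"
  unfolding hist_def by (auto simp: restrict_def fun_eq_iff)

lemma hist_at: "j < i \<Longrightarrow> hist X A Y i w j = (X j w, A j w, Y j w)"
  unfolding hist_def by simp

lemma Psi_eq: "j < i \<Longrightarrow> Psi j (hist X A Y i w) = Dr j w"
  unfolding Psi_def D_decomp Ur_def Vr_def Wr_def by (simp add: hist_restrict hist_at)

lemma Psi_meas:
  assumes ji: "j < i" and i: "i < n"
  shows "Psi j \<in> borel_measurable (histM LX LA i)"
proof -
  have j: "j < n" using ji i by simp
  have r[measurable]: "(\<lambda>h. restrict h {..<j}) \<in> measurable (histM LX LA i) (histM LX LA j)"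
    unfolding histM_def by (rule measurable_restrict_subset) (use ji in auto)
  have c: "(\<lambda>h. h j) \<in> measurable (histM LX LA i) (LX \<Otimes>\<^sub>M LA \<Otimes>\<^sub>M borel)"
    unfolding histM_def obsM_def by (rule measurable_component_singleton) (use ji in auto)
  have [measurable]: "(\<lambda>h. fst (h j)) \<in> measurable (histM LX LA i) LX"
    "(\<lambda>h. fst (snd (h j))) \<in> measurable (histM LX LA i) LA"
    "(\<lambda>h. snd (snd (h j))) \<in> borel_measurable (histM LX LA i)"
    using c by measurable
  note [measurable] = Uf_comp[OF j] Vf_comp[OF j] Wf_comp
  show ?thesis unfolding Psi_def by measurable
qed

lemma D_orth:
  assumes ji: "j < i" and i: "i < n"
  shows "(\<integral>w. Dr j w * Dr i w \<partial>M) = 0"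
proof -
  have j: "j < n" using ji i by simp
  note [measurable] = Psi_meas[OF ji i] Uf_comp[OF i] Vf_comp[OF i] Wf_comp
  note m = rv_meas[OF i]
  have dm: "Dr j \<in> borel_measurable M" by (rule D_meas[OF j])
  have iD: "integrable M (\<lambda>w. (Dr j w)\<^sup>2)" by (rule D_sq[OF j])
  have iU: "integrable M (\<lambda>w. Dr j w * Ur i w)" by (rule int_prod[OF dm m(1) iD U_sq(1)[OF i]])
  have iV: "integrable M (\<lambda>w. Dr j w * Vr i w)" by (rule int_prod[OF dm m(2) iD V_sq[OF i]])
  have iW: "integrable M (\<lambda>w. Dr j w * Wr i w)" by (rule int_prod[OF dm m(5) iD W_sq(1)[OF i]])
  have eU: "(\<integral>w. Dr j w * Ur i w \<partial>M) = 0"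
  proof -
    have "(\<integral>w. Psi j (hist X A Y i w) * Uf i (hist X A Y i w) (X i w) (A i w) (Y i w) \<partial>M) = 0"
    proof (rule cross_y[OF i, where F="\<lambda>h x a y. Psi j h * Uf i h x a y"])
      show "(\<lambda>(h, x, a, y). Psi j h * Uf i h x a y) \<in> borel_measurable (histM LX LA i \<Otimes>\<^sub>M LX \<Otimes>\<^sub>M LA \<Otimes>\<^sub>M borel)"
        by measurable
      show "integrable M (\<lambda>w. Psi j (hist X A Y i w) * Uf i (hist X A Y i w) (X i w) (A i w) (Y i w))"
        using iU by (simp add: Psi_eq[OF ji] Ur_def)
    qed (use y_pt in auto)
    then show ?thesis by (simp add: Psi_eq[OF ji] Ur_def)
  qed
  have eV: "(\<integral>w. Dr j w * Vr i w \<partial>M) = 0"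
  proof -
    have "(\<integral>w. Psi j (hist X A Y i w) * Vf i (hist X A Y i w) (X i w) (A i w) \<partial>M) = 0"
    proof (rule cross_a[OF i, where F="\<lambda>h x a. Psi j h * Vf i h x a"])
      show "(\<lambda>(h, x, a). Psi j h * Vf i h x a) \<in> borel_measurable (histM LX LA i \<Otimes>\<^sub>M LX \<Otimes>\<^sub>M LA)"
        by measurable
      show "integrable M (\<lambda>w. Psi j (hist X A Y i w) * Vf i (hist X A Y i w) (X i w) (A i w))"
        using iV by (simp add: Psi_eq[OF ji] Vr_def)
    qed (use a_pt[OF i] in auto)
    then show ?thesis by (simp add: Psi_eq[OF ji] Vr_def)
  qed
  have eW: "(\<integral>w. Dr j w * Wr i w \<partial>M) = 0"
  proof -
    have "(\<integral>w. Psi j (hist X A Y i w) * Wf (X i w) \<partial>M) = 0"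
    proof (rule cross_x[OF i, where F="\<lambda>h x. Psi j h * Wf x"])
      show "(\<lambda>(h, x). Psi j h * Wf x) \<in> borel_measurable (histM LX LA i \<Otimes>\<^sub>M LX)"
        by measurable
      show "integrable M (\<lambda>w. Psi j (hist X A Y i w) * Wf (X i w))"
        using iW by (simp add: Psi_eq[OF ji] Wr_def)
    qed (use W_Xi in auto)
    then show ?thesis by (simp add: Psi_eq[OF ji] Wr_def)
  qed
  have "(\<integral>w. Dr j w * Dr i w \<partial>M) = (\<integral>w. Dr j w * Ur i w + Dr j w * Vr i w + Dr j w * Wr i w \<partial>M)"
    by (simp add: D_decomp[of i] algebra_simps)
  also have "\<dots> = 0" using iU iV iW eU eV eW by simp
  finally show ?thesis .
qed


lemma E_cross_ij:
  assumes i: "i < n" and j: "j < n"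
  shows "(\<integral>w. Dr i w * Dr j w \<partial>M) = (if i = j then (\<integral>w. (Dr i w)\<^sup>2 \<partial>M) else 0)"
proof (cases "i = j")
  case True then show ?thesis by (simp add: power2_eq_square)
next
  case False
  show ?thesis
  proof (cases "i < j")
    case True then show ?thesis using D_orth[OF True j] False by simp
  next
    case nij: False
    then have "j < i" using False by simp
    then show ?thesis using D_orth[OF \<open>j < i\<close> i] False by (simp add: mult.commute)
  qed
qed

lemma main:
  shows "(\<integral>\<omega>. (tau_aipw LA g pol muhat X A Y n \<omega> - tau Xi LA Gam g)\<^sup>2 \<partial>M)
    \<le> (1 / real n) * (v_star_sq M Xi LA Gam g pol X A Y n
        + (1 / real n) * (\<Sum>i<n. \<integral>\<omega>. (g (X i \<omega>) (A i \<omega>))\<^sup>2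
            * (muhat i (hist X A Y i \<omega>) (X i \<omega>) (A i \<omega>) - mu_star Gam (X i \<omega>) (A i \<omega>))\<^sup>2
            / (pol i (X i \<omega>) (hist X A Y i \<omega>) (A i \<omega>))\<^sup>2 \<partial>M))"
proof -
  let ?S = "\<lambda>i. \<integral>\<omega>. (g (X i \<omega>) (A i \<omega>))\<^sup>2 * (sqrt (sigma2 Gam (X i \<omega>) (A i \<omega>)))\<^sup>2
          / (pol i (X i \<omega>) (hist X A Y i \<omega>) (A i \<omega>))\<^sup>2 \<partial>M"
  let ?E = "\<lambda>i. \<integral>\<omega>. (g (X i \<omega>) (A i \<omega>))\<^sup>2
            * (muhat i (hist X A Y i \<omega>) (X i \<omega>) (A i \<omega>) - mu_star Gam (X i \<omega>) (A i \<omega>))\<^sup>2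
            / (pol i (X i \<omega>) (hist X A Y i \<omega>) (A i \<omega>))\<^sup>2 \<partial>M"
  let ?V = "\<integral>x. (Wf x)\<^sup>2 \<partial>Xi"
  have np: "0 < real n" using n_pos by simp
  have est: "\<And>\<omega>. tau_aipw LA g pol muhat X A Y n \<omega> - tau Xi LA Gam g = (1 / real n) * (\<Sum>i<n. Dr i \<omega>)"
    using np by (simp add: tau_aipw_def Dr_def sum_subtractf field_simps)
  have sq: "\<And>\<omega>. (tau_aipw LA g pol muhat X A Y n \<omega> - tau Xi LA Gam g)\<^sup>2
      = (1 / real n)\<^sup>2 * (\<Sum>i<n. \<Sum>j<n. Dr i \<omega> * Dr j \<omega>)"
  proof -
    fix \<omega>
    have "(\<Sum>i<n. Dr i \<omega>)\<^sup>2 = (\<Sum>i<n. \<Sum>j<n. Dr i \<omega> * Dr j \<omega>)"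
      unfolding power2_eq_square by (rule sum_product)
    then show "(tau_aipw LA g pol muhat X A Y n \<omega> - tau Xi LA Gam g)\<^sup>2
      = (1 / real n)\<^sup>2 * (\<Sum>i<n. \<Sum>j<n. Dr i \<omega> * Dr j \<omega>)"
      unfolding est power_mult_distrib by simp
  qed
  have ip: "\<And>i j. i < n \<Longrightarrow> j < n \<Longrightarrow> integrable M (\<lambda>\<omega>. Dr i \<omega> * Dr j \<omega>)"
    by (rule int_prod[OF D_meas D_meas D_sq D_sq])
  have "(\<integral>\<omega>. (tau_aipw LA g pol muhat X A Y n \<omega> - tau Xi LA Gam g)\<^sup>2 \<partial>M)
      = (1 / real n)\<^sup>2 * (\<Sum>i<n. \<Sum>j<n. \<integral>\<omega>. Dr i \<omega> * Dr j \<omega> \<partial>M)"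
  proof -
    have "(\<integral>\<omega>. (\<Sum>i<n. \<Sum>j<n. Dr i \<omega> * Dr j \<omega>) \<partial>M) = (\<Sum>i<n. \<integral>\<omega>. (\<Sum>j<n. Dr i \<omega> * Dr j \<omega>) \<partial>M)"
      by (rule Bochner_Integration.integral_sum) (auto intro!: Bochner_Integration.integrable_sum ip)
    also have "\<dots> = (\<Sum>i<n. \<Sum>j<n. \<integral>\<omega>. Dr i \<omega> * Dr j \<omega> \<partial>M)"
      by (rule sum.cong[OF refl], rule Bochner_Integration.integral_sum) (auto intro!: ip)
    finally show ?thesis unfolding sq by simp
  qed
  also have "\<dots> = (1 / real n)\<^sup>2 * (\<Sum>i<n. \<integral>\<omega>. (Dr i \<omega>)\<^sup>2 \<partial>M)"
  proof -
    have "(\<Sum>j<n. \<integral>\<omega>. Dr i \<omega> * Dr j \<omega> \<partial>M) = (\<integral>\<omega>. (Dr i \<omega>)\<^sup>2 \<partial>M)" if i: "i < n" for i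
    proof -
      have "(\<Sum>j<n. \<integral>\<omega>. Dr i \<omega> * Dr j \<omega> \<partial>M) = (\<Sum>j<n. if i = j then (\<integral>\<omega>. (Dr i \<omega>)\<^sup>2 \<partial>M) else 0)"
        by (rule sum.cong[OF refl]) (use E_cross_ij[OF i] in simp)
      also have "\<dots> = (\<integral>\<omega>. (Dr i \<omega>)\<^sup>2 \<partial>M)" using i by simp
      finally show ?thesis .
    qed
    then show ?thesis by simp
  qed
  also have "\<dots> \<le> (1 / real n)\<^sup>2 * (\<Sum>i<n. ?S i + ?E i + ?V)"
  proof (intro mult_left_mono sum_mono)
    fix i assume "i \<in> {..<n}"
    then have i: "i < n" by simp
    have "(\<integral>\<omega>. (ar i \<omega>)\<^sup>2 \<partial>M) = ?E i" by (simp add: a_sq_eq)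
    then show "(\<integral>\<omega>. (Dr i \<omega>)\<^sup>2 \<partial>M) \<le> ?S i + ?E i + ?V"
      using E_D_sq[OF i] U_sq(2)[OF i] W_sq(2)[OF i] by simp
  qed simp
  also have "\<dots> = (1 / real n) * (?V + (1 / real n) * (\<Sum>i<n. ?S i) + (1 / real n) * (\<Sum>i<n. ?E i))"
    using np by (simp add: sum.distrib power2_eq_square field_simps)
  also have "?V = prob_space.variance Xi (\<lambda>x. inner_A LA (g x) (mu_star Gam x))"
    by (simp add: Wf_def tau_def)
  finally show ?thesis
    by (simp add: v_star_sq_def norm_k_sq_def algebra_simps)
qed

end

theorem theorem1:
  fixes M :: "'w measure"
    and LX :: "'x measure" and LA :: "'a measure"
    and Xi :: "'x measure" and Gam :: "'x \<Rightarrow> 'a \<Rightarrow> real measure"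
    and g :: "'x \<Rightarrow> 'a \<Rightarrow> real"
    and pol :: "nat \<Rightarrow> 'x \<Rightarrow> (nat \<Rightarrow> 'x \<times> 'a \<times> real) \<Rightarrow> 'a \<Rightarrow> real"
    and muhat :: "nat \<Rightarrow> (nat \<Rightarrow> 'x \<times> 'a \<times> real) \<Rightarrow> 'x \<Rightarrow> 'a \<Rightarrow> real"
    and X :: "nat \<Rightarrow> 'w \<Rightarrow> 'x" and A :: "nat \<Rightarrow> 'w \<Rightarrow> 'a" and Y :: "nat \<Rightarrow> 'w \<Rightarrow> real"
    and n :: nat
  assumes n_pos: "0 < n"
    and sf_X: "sigma_finite_measure LX"
    and sf_A: "sigma_finite_measure LA"
    \<comment> \<open>true instance: Xi a probability measure on X, Gam a Markov kernel X x A \<rightarrow> Y\<close>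
    and Xi_prob: "prob_space Xi" and Xi_sets: "sets Xi = sets LX"
    and Gam_kernel: "(\<lambda>(x, a). Gam x a) \<in> measurable (LX \<Otimes>\<^sub>M LA) (subprob_algebra borel)"
    and Gam_prob: "\<And>x a. x \<in> space LX \<Longrightarrow> a \<in> space LA \<Longrightarrow> prob_space (Gam x a)"
    and Gam_sq: "\<And>x a. x \<in> space LX \<Longrightarrow> a \<in> space LA \<Longrightarrow> integrable (Gam x a) (\<lambda>y. y\<^sup>2)"
    \<comment> \<open>evaluation function\<close>
    and g_meas: "(\<lambda>(x, a). g x a) \<in> borel_measurable (LX \<Otimes>\<^sub>M LA)"
    \<comment> \<open>behavioural policies: densities (w.r.t. LA) of Markov kernels X x O^(i-1) \<rightarrow> A\<close>
    and pol_meas: "\<And>i. i < n \<Longrightarrow>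
        (\<lambda>(x, h, a). pol i x h a) \<in> borel_measurable (LX \<Otimes>\<^sub>M histM LX LA i \<Otimes>\<^sub>M LA)"
    and pol_pos: "\<And>i x h a. i < n \<Longrightarrow> x \<in> space LX \<Longrightarrow> h \<in> space (histM LX LA i)
        \<Longrightarrow> a \<in> space LA \<Longrightarrow> 0 < pol i x h a"
    and pol_norm: "\<And>i x h. i < n \<Longrightarrow> x \<in> space LX \<Longrightarrow> h \<in> space (histM LX LA i)
        \<Longrightarrow> (\<integral>\<^sup>+ a. ennreal (pol i x h a) \<partial>LA) = 1"
    \<comment> \<open>estimates depending measurably only on the past observations\<close>
    and muhat_meas: "\<And>i. i < n \<Longrightarrow>
        (\<lambda>(h, x, a). muhat i h x a) \<in> borel_measurable (histM LX LA i \<Otimes>\<^sub>M LX \<Otimes>\<^sub>M LA)"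
    \<comment> \<open>the data O_n under the true instance, realised on a probability space M\<close>
    and M_prob: "prob_space M"
    and X_meas: "\<And>i. i < n \<Longrightarrow> X i \<in> measurable M LX"
    and A_meas: "\<And>i. i < n \<Longrightarrow> A i \<in> measurable M LA"
    and Y_meas: "\<And>i. i < n \<Longrightarrow> Y i \<in> borel_measurable M"
    \<comment> \<open>X_i ~ Xi independent of O_(i-1), and A_i | (X_i, O_(i-1)) has density pi_i\<close>
    and law_XA: "\<And>i. i < n \<Longrightarrow>
        distr M (histM LX LA i \<Otimes>\<^sub>M LX \<Otimes>\<^sub>M LA) (\<lambda>\<omega>. (hist X A Y i \<omega>, X i \<omega>, A i \<omega>))
        = density (distr M (histM LX LA i) (hist X A Y i) \<Otimes>\<^sub>M Xi \<Otimes>\<^sub>M LA)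
                  (\<lambda>(h, x, a). ennreal (pol i x h a))"
    \<comment> \<open>Y_i | (X_i, A_i, O_(i-1)) ~ Gam(. | X_i, A_i)\<close>
    and law_Y: "\<And>i. i < n \<Longrightarrow>
        distr M (histM LX LA i \<Otimes>\<^sub>M LX \<Otimes>\<^sub>M LA \<Otimes>\<^sub>M borel)
              (\<lambda>\<omega>. (hist X A Y i \<omega>, X i \<omega>, A i \<omega>, Y i \<omega>))
        = distr M (histM LX LA i \<Otimes>\<^sub>M LX \<Otimes>\<^sub>M LA) (\<lambda>\<omega>. (hist X A Y i \<omega>, X i \<omega>, A i \<omega>))
          \<bind> (\<lambda>(h, x, a). distr (Gam x a) (histM LX LA i \<Otimes>\<^sub>M LX \<Otimes>\<^sub>M LA \<Otimes>\<^sub>M borel)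
                                   (\<lambda>y. (h, x, a, y)))"
    \<comment> \<open>all integrals / expectations appearing are finite\<close>
    and int_gmu: "\<And>x. x \<in> space LX \<Longrightarrow> integrable LA (\<lambda>a. g x a * mu_star Gam x a)"
    and int_gmuhat: "\<And>i h x. i < n \<Longrightarrow> h \<in> space (histM LX LA i) \<Longrightarrow> x \<in> space LX
        \<Longrightarrow> integrable LA (\<lambda>a. g x a * muhat i h x a)"
    and int_tau: "integrable Xi (\<lambda>x. inner_A LA (g x) (mu_star Gam x))"
    and int_var: "integrable Xi (\<lambda>x. (inner_A LA (g x) (mu_star Gam x))\<^sup>2)"
    and int_sigma: "\<And>i. i < n \<Longrightarrow> integrable M (\<lambda>\<omega>.
        (g (X i \<omega>) (A i \<omega>))\<^sup>2 * (sqrt (sigma2 Gam (X i \<omega>) (A i \<omega>)))\<^sup>2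
          / (pol i (X i \<omega>) (hist X A Y i \<omega>) (A i \<omega>))\<^sup>2)"
    and int_err: "\<And>i. i < n \<Longrightarrow> integrable M (\<lambda>\<omega>.
        (g (X i \<omega>) (A i \<omega>))\<^sup>2
          * (muhat i (hist X A Y i \<omega>) (X i \<omega>) (A i \<omega>) - mu_star Gam (X i \<omega>) (A i \<omega>))\<^sup>2
          / (pol i (X i \<omega>) (hist X A Y i \<omega>) (A i \<omega>))\<^sup>2)"
  shows "(\<integral>\<omega>. (tau_aipw LA g pol muhat X A Y n \<omega> - tau Xi LA Gam g)\<^sup>2 \<partial>M)
    \<le> (1 / real n) * (v_star_sq M Xi LA Gam g pol X A Y n
        + (1 / real n) * (\<Sum>i<n. \<integral>\<omega>. (g (X i \<omega>) (A i \<omega>))\<^sup>2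
            * (muhat i (hist X A Y i \<omega>) (X i \<omega>) (A i \<omega>) - mu_star Gam (X i \<omega>) (A i \<omega>))\<^sup>2
            / (pol i (X i \<omega>) (hist X A Y i \<omega>) (A i \<omega>))\<^sup>2 \<partial>M))"
proof -
  interpret L: aipw M LX LA Xi Gam g pol muhat X A Y n
    by (rule aipw.intro) (fact assms)+
  show ?thesis by (rule L.main)
qed

end
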